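(* Let $\mathcal M\subset \mathcal M_n(\mathbb R)$ be a compact convex set of irreducible Metzler matrices. There exist a time $T>0$ and a rate $\mu>0$ such that for all $t\ge T$, all $M\in L^\infty(0,t)$ and all $x,y\in K_+$, \[ d(R(t,M)x,R(t,M)y)\le e^{-\mu t}d(x,y). \]
   Context: A matrix is Metzler if its off-diagonal entries are nonnegative; it is irreducible if for every partition $\{1,\dots,n\}=I\sqcup J$ into nonempty sets some $m_{ij}$ with $i\in I$, $j\in J$ is positive. $K_+$ is the positive orthant of $\mathbb R^n$. $L^\infty(0,t)$ is the set of measurable controls $M:[0,t]\to\mathcal M$; $R(t,M)$ is the resolvent of $\dot x=M(s)x$ on $[0,t]$. $d(x,y)=\log\max_{i,j}\frac{x_iy_j}{x_jy_i}$ is Hilbert's projective metric on $K_+$. *)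

theory Defs
  imports "HOL-Analysis.Analysis"
begin

definition metzler :: "real^'n^'n \<Rightarrow> bool" where
  "metzler A \<longleftrightarrow> (\<forall>i j. i \<noteq> j \<longrightarrow> 0 \<le> A $ i $ j)"

definition irreducible_mat :: "real^'n^'n \<Rightarrow> bool" where
  "irreducible_mat A \<longleftrightarrow>
     (\<forall>I::'n set. I \<noteq> {} \<and> I \<noteq> UNIV \<longrightarrow> (\<exists>i\<in>I. \<exists>j\<in>-I. 0 < A $ i $ j))"

definition pos_orthant :: "(real^'n) set" where
  "pos_orthant = {x. \<forall>i. 0 < x $ i}"

definition hilbert_metric :: "real^'n \<Rightarrow> real^'n \<Rightarrow> real" where
  "hilbert_metric x y = ln (Max {(x $ i * y $ j) / (x $ j * y $ i) | i j. True})"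

definition admissible_control :: "real \<Rightarrow> (real^'n^'n) set \<Rightarrow> (real \<Rightarrow> real^'n^'n) \<Rightarrow> bool" where
  "admissible_control t Ms M \<longleftrightarrow>
     M \<in> borel_measurable (lebesgue_on {0..t}) \<and> (\<forall>s\<in>{0..t}. M s \<in> Ms)"

text \<open>Fundamental matrix solution (Caratheodory sense) of Phi' = M(s) Phi, Phi(0) = I on [0,t].\<close>
definition is_fundamental_solution :: "real \<Rightarrow> (real \<Rightarrow> real^'n^'n) \<Rightarrow> (real \<Rightarrow> real^'n^'n) \<Rightarrow> bool" where
  "is_fundamental_solution t M Phi \<longleftrightarrow>
     continuous_on {0..t} Phi \<and>
     (\<forall>s\<in>{0..t}. ((\<lambda>r. M r ** Phi r) has_integral (Phi s - mat 1)) {0..s})"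

definition resolvent :: "real \<Rightarrow> (real \<Rightarrow> real^'n^'n) \<Rightarrow> real^'n^'n" where
  "resolvent t M = (THE A. \<exists>Phi. is_fundamental_solution t M Phi \<and> Phi t = A)"

end

theory Submission
  imports Defs
begin


definition hr :: "real^'n \<Rightarrow> real^'n \<Rightarrow> 'n \<Rightarrow> 'n \<Rightarrow> real" where
  "hr x y i j = (x $ i * y $ j) / (x $ j * y $ i)"

lemma ln_le_iff_le_exp: "0 < (x::real) \<Longrightarrow> ln x \<le> c \<longleftrightarrow> x \<le> exp c"
  by (metis exp_gt_zero ln_exp ln_le_cancel_iff)

lemma hset_eq: "{(x $ i * y $ j) / (x $ j * y $ i) | i j. True} = (\<lambda>(i,j). hr x y i j) ` UNIV"
  by (auto simp: hr_def)

lemma hilbert_ratio_le: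
  fixes x y :: "real^'n"
  assumes "x \<in> pos_orthant" "y \<in> pos_orthant"
  shows "hr x y i j \<le> exp (hilbert_metric x y)"
proof -
  let ?S = "(\<lambda>(i,j). hr x y i j) ` (UNIV :: ('n\<times>'n) set)"
  have fin: "finite ?S" by simp
  have "x$i > 0" "y$i>0" using assms by (auto simp: pos_orthant_def)
  hence "hr x y i i = 1" by (simp add: hr_def)
  hence "1 \<in> ?S" by (metis (mono_tags, lifting) UNIV_I case_prod_conv image_eqI)
  hence pos: "0 < Max ?S" using fin by (meson Max_ge less_le_trans zero_less_one)
  have "hr x y i j \<le> Max ?S" using fin by (intro Max_ge) auto
  thus ?thesis using pos unfolding hilbert_metric_def hset_eq by simp
qed

lemma hilbert_nonneg:
  fixes x y :: "real^'n"
  assumes "x \<in> pos_orthant" "y \<in> pos_orthant"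
  shows "0 \<le> hilbert_metric x y"
proof -
  let ?S = "(\<lambda>(i,j). hr x y i j) ` (UNIV :: ('n\<times>'n) set)"
  have fin: "finite ?S" by simp
  have "hr x y i i = 1" for i
  proof -
    have "x$i > 0" "y$i>0" using assms by (auto simp: pos_orthant_def)
    thus ?thesis by (simp add: hr_def)
  qed
  hence "1 \<in> ?S" by (metis (mono_tags, lifting) UNIV_I case_prod_conv image_eqI)
  hence "1 \<le> Max ?S" using fin by simp
  thus ?thesis unfolding hilbert_metric_def hset_eq by simp
qed

lemma hilbert_le:
  fixes x y :: "real^'n"
  assumes "\<And>i j. hr x y i j \<le> exp c" "x \<in> pos_orthant" "y \<in> pos_orthant"
  shows "hilbert_metric x y \<le> c"
proof -
  let ?S = "(\<lambda>(i,j). hr x y i j) ` (UNIV :: ('n\<times>'n) set)"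
  have fin: "finite ?S" by simp
  have "Max ?S \<le> exp c" using fin assms by (subst Max_le_iff) auto
  moreover have "0 < Max ?S"
  proof -
    obtain i :: 'n where True by simp
    have "x$i > 0" "y$i>0" using assms by (auto simp: pos_orthant_def)
    hence "hr x y i i = 1" by (simp add: hr_def)
    hence "1 \<in> ?S" by (metis (mono_tags, lifting) UNIV_I case_prod_conv image_eqI)
    thus ?thesis using fin by (meson Max_ge less_le_trans zero_less_one)
  qed
  ultimately show ?thesis unfolding hilbert_metric_def hset_eq
    by (simp add: ln_le_iff_le_exp)
qed

lemma scalar_contr:
  fixes r q \<rho> :: real
  assumes r: "1 \<le> r" and q: "0 < q" "q \<le> 1" and rho: "0 < \<rho>" "\<rho> \<le> (1-q)*r + q" "\<rho> \<le> 1/q"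
  shows "ln \<rho> \<le> (1 - min (1/2) (q^3)) * ln r"
proof -
  define \<epsilon> where "\<epsilon> = min (1/2) (q^3)"
  have e0: "0 \<le> \<epsilon>" "\<epsilon> \<le> 1/2" "\<epsilon> \<le> q^3" using q by (auto simp: \<epsilon>_def)
  define d where "d = ln r"
  have d0: "0 \<le> d" using r by (simp add: d_def)
  have rd: "r = exp d" using r by (simp add: d_def)
  have "ln \<rho> \<le> (1-\<epsilon>) * d"
  proof (cases "-2 * ln q \<le> d")
    case True
    have "ln \<rho> \<le> ln (1/q)" using rho q by simp
    also have "\<dots> = - ln q" using q by (simp add: ln_div)
    also have "\<dots> \<le> d/2" using True by simp
    also have "\<dots> \<le> (1-\<epsilon>)*d" 
    proof -
      have "(1/2)*d \<le> (1-\<epsilon>)*d" using e0 d0 by (intro mult_right_mono) auto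
      thus ?thesis by simp
    qed
    finally show ?thesis .
  next
    case False
    have "exp (-d) > exp (2 * ln q)" using False by simp
    moreover have "exp (2 * ln q) = q^2"
    proof -
      have "exp (2 * ln q) = exp (ln q + ln q)" by (simp only: mult_2)
      also have "\<dots> = exp (ln q) * exp (ln q)" by (rule exp_add)
      also have "\<dots> = q^2" using q by (simp add: power2_eq_square)
      finally show ?thesis .
    qed
    ultimately have ed: "exp (-d) > q^2" by simp
    have "exp d \<ge> 1 + d" by (rule exp_ge_add_one_self)
    hence "exp d * exp (-d) \<ge> (1 + d) * exp (-d)" by (simp add: mult_right_mono)
    hence "1 - exp (-d) \<ge> d * exp (-d)" by (simp add: exp_minus field_simps)
    moreover have "d * exp (-d) \<ge> d * q^2" using ed d0 by (simp add: mult_left_mono)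
    ultimately have A: "q * (1 - exp (-d)) \<ge> q * (d * q^2)" using q by (simp add: mult_left_mono)
    have B: "\<epsilon> * d \<le> q^3 * d" using e0 d0 by (simp add: mult_right_mono)
    have C: "exp (-(\<epsilon>*d)) \<ge> 1 - \<epsilon>*d" using exp_ge_add_one_self[of "-(\<epsilon>*d)"] by simp
    have D: "(1-q) + q * exp (-d) \<le> exp (-(\<epsilon>*d))"
    proof -
      have "q^3 * d = q * (d * q^2)" by (simp add: power3_eq_cube power2_eq_square)
      hence "\<epsilon> * d \<le> q * (1 - exp (-d))" using A B by linarith
      moreover have "q*(1 - exp(-d)) = q - q*exp(-d)" by (simp only: right_diff_distrib mult_1_right)
      ultimately show ?thesis using C by linarith
    qed
    have "(1-q)*r + q = exp d * ((1-q) + q * exp (-d))" by (simp add: rd exp_minus field_simps)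
    also have "\<dots> \<le> exp d * exp (-(\<epsilon>*d))" using D by simp
    also have "\<dots> = exp (d + -(\<epsilon>*d))" by (simp only: exp_add)
    also have "\<dots> = exp ((1-\<epsilon>)*d)" by (simp add: left_diff_distrib)
    finally have "\<rho> \<le> exp ((1-\<epsilon>)*d)" using rho by simp
    thus ?thesis using rho by (simp add: ln_le_iff_le_exp ln_exp)
  qed
  thus ?thesis by (simp add: \<epsilon>_def d_def)
qed

lemma mv_nth: "(P *v x) $ i = (\<Sum>k\<in>UNIV. P$i$k * x$k)"
  by (simp add: matrix_vector_mult_def)

lemma contr_pos:
  fixes P :: "real^'n^'n"
  assumes pos: "\<And>i k. 0 < P$i$k" and x: "x \<in> pos_orthant"
  shows "P *v x \<in> pos_orthant"
proof -
  have "0 < (P *v x) $ i" for i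
  proof -
    have "0 < (\<Sum>k\<in>UNIV. P$i$k * x$k)"
      using pos x by (intro sum_pos) (auto simp: pos_orthant_def)
    thus ?thesis by (simp add: mv_nth)
  qed
  thus ?thesis by (simp add: pos_orthant_def)
qed

lemma contr_ratio:
  fixes P :: "real^'n^'n" and z :: "real^'n"
  assumes rat: "\<And>i j k. \<theta> * P$i$k \<le> P$j$k" and z: "\<And>l. 0 \<le> z$l"
  shows "\<theta> * (P *v z)$i \<le> (P *v z)$j"
proof -
  have "\<theta> * (P *v z)$i = (\<Sum>k\<in>UNIV. (\<theta> * P$i$k) * z$k)"
    by (simp add: mv_nth sum_distrib_left mult.assoc)
  also have "\<dots> \<le> (\<Sum>k\<in>UNIV. P$j$k * z$k)"
    using rat z by (intro sum_mono mult_right_mono) auto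
  finally show ?thesis by (simp add: mv_nth)
qed

lemma contr:
  fixes P :: "real^'n^'n"
  assumes pos: "\<And>i k. 0 < P$i$k" and rat: "\<And>i j k. \<theta> * P$i$k \<le> P$j$k"
    and th: "0 < \<theta>" "\<theta> \<le> 1"
    and x: "x \<in> pos_orthant" and y: "y \<in> pos_orthant"
  shows "hilbert_metric (P *v x) (P *v y) \<le> (1 - min (1/2) ((\<theta>^2)^3)) * hilbert_metric x y"
proof -
  define q where "q = \<theta>^2"
  have q: "0 < q" "q \<le> 1" using th by (auto simp: q_def power_le_one)
  define d where "d = hilbert_metric x y"
  define r where "r = exp d"
  have d0: "0 \<le> d" using x y by (simp add: d_def hilbert_nonneg)
  have r1: "1 \<le> r" using d0 by (simp add: r_def)
  have xp: "\<And>l. 0 < x$l" and yp: "\<And>l. 0 < y$l" using x y by (auto simp: pos_orthant_def)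
  define t where "t l = x$l / y$l" for l
  obtain j0 where j0: "\<And>l. t j0 \<le> t l"
  proof -
    have "Min (range t) \<in> range t" by (rule Min_in) auto
    then obtain j0 where "t j0 = Min (range t)" by (metis imageE)
    moreover have "Min (range t) \<le> t l" for l by (rule Min_le) auto
    ultimately show ?thesis using that by metis
  qed
  define m where "m = t j0"
  have m0: "0 < m" using xp yp by (simp add: m_def t_def)
  have xlo: "m * y$l \<le> x$l" for l
    using j0[of l] yp[of l] by (simp add: m_def t_def field_simps)
  have xhi: "x$l \<le> r * m * y$l" for l
  proof -
    have "hr x y l j0 \<le> r" using hilbert_ratio_le[OF x y] by (simp add: r_def d_def)
    hence "(x$l * y$j0) / (x$j0 * y$l) \<le> r" by (simp add: hr_def)
    hence "x$l * y$j0 \<le> r * (x$j0 * y$l)" using xp yp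
      by (simp add: divide_le_eq mult_pos_pos)
    hence "x$l \<le> r * (x$j0 * y$l) / y$j0" using yp[of j0]
      by (simp add: le_divide_eq)
    thus ?thesis using yp by (simp add: m_def t_def field_simps)
  qed
  define X where "X = P *v x"
  define Y where "Y = P *v y"
  define u where "u = x - m *\<^sub>R y"
  define U where "U = P *v u"
  have u0: "\<And>l. 0 \<le> u$l" using xlo by (simp add: u_def)
  have UXY: "U$i = X$i - m * Y$i" for i
    by (simp add: U_def X_def Y_def u_def matrix_vector_mult_diff_distrib
          matrix_vector_mult_scaleR)
  have Xp: "\<And>i. 0 < X$i" and Yp: "\<And>i. 0 < Y$i"
    using contr_pos[OF pos x] contr_pos[OF pos y] by (auto simp: X_def Y_def pos_orthant_def)
  have U0: "\<And>i. 0 \<le> U$i"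
  proof -
    fix i
    have "0 \<le> (\<Sum>k\<in>UNIV. P$i$k * u$k)" using pos u0 by (intro sum_nonneg) (simp add: less_imp_le)
    thus "0 \<le> U$i" by (simp add: U_def mv_nth)
  qed
  have Xhi: "X$i \<le> r * m * Y$i" for i
  proof -
    have "(\<Sum>k\<in>UNIV. P$i$k * x$k) \<le> (\<Sum>k\<in>UNIV. P$i$k * (r * m * y$k))"
      using pos xhi by (intro sum_mono mult_left_mono) (auto simp: less_imp_le)
    thus ?thesis by (simp add: X_def Y_def mv_nth sum_distrib_left mult.assoc mult.left_commute)
  qed
  have ratU: "\<theta> * U$i \<le> U$j" for i j unfolding U_def using contr_ratio[OF rat] u0 by blast
  have ratX: "\<theta> * X$i \<le> X$j" for i j unfolding X_def using contr_ratio[OF rat] xp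
    by (meson less_imp_le)
  have ratY: "\<theta> * Y$i \<le> Y$j" for i j unfolding Y_def using contr_ratio[OF rat] yp
    by (meson less_imp_le)
  define \<epsilon> where "\<epsilon> = min (1/2) (q^3)"
  have main: "hr X Y i j \<le> exp ((1-\<epsilon>) * d)" for i j
  proof -
    define \<rho> where "\<rho> = hr X Y i j"
    have den: "0 < X$j * Y$i" using Xp Yp by simp
    have rho0: "0 < \<rho>" using Xp Yp by (simp add: \<rho>_def hr_def)
    define a where "a = U$i / Y$i"
    have a0: "0 \<le> a" using U0[of i] Yp[of i] by (simp add: a_def)
    have Xi: "X$i = (m + a) * Y$i" using UXY[of i] Yp[of i] by (simp add: a_def field_simps)
    have ma: "m + a \<le> r * m" using Xhi[of i] Xi Yp[of i] by simp
    have "U$j * Y$i \<ge> (\<theta> * U$i) * (\<theta> * Y$j)"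
      using ratU[of i j] ratY[of j i] U0 Yp th by (intro mult_mono) (auto intro: less_imp_le)
    hence UjYi: "U$j * Y$i \<ge> q * a * Y$i * Y$j" using Yp[of i]
      by (simp add: q_def a_def power2_eq_square field_simps)
    have XjYi: "X$j * Y$i \<ge> Y$i * Y$j * (m + q * a)"
    proof -
      have "X$j = m * Y$j + U$j" using UXY[of j] by simp
      hence "X$j * Y$i = (m * Y$j + U$j) * Y$i" by simp
      hence "X$j * Y$i = m * Y$j * Y$i + U$j * Y$i" by (simp add: distrib_right)
      thus ?thesis using UjYi by (simp add: algebra_simps)
    qed
    have B1: "\<rho> \<le> (1-q)*r + q"
    proof -
      have id: "((1-q)*r + q) * (m + q*a) - (m + a) = q*a*(1-q)*(r-1) + (1-q)*(r*m - m - a)"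
        by (simp add: algebra_simps)
      have "0 \<le> q*a*(1-q)*(r-1)" using q a0 r1 by simp
      moreover have "0 \<le> (1-q)*(r*m - m - a)" using q ma by simp
      ultimately have k: "m + a \<le> ((1-q)*r + q) * (m + q*a)" using id by linarith
      have "X$i * Y$j = (m + a) * (Y$i * Y$j)" using Xi by simp
      also have "\<dots> \<le> ((1-q)*r + q) * (m + q*a) * (Y$i * Y$j)"
        using k Yp by (intro mult_right_mono) (auto intro: less_imp_le)
      also have "\<dots> \<le> ((1-q)*r + q) * (X$j * Y$i)"
      proof -
        have c0: "0 \<le> (1-q)*r + q" using q r1 by (simp add: add_nonneg_nonneg)
        have "((1-q)*r+q) * (Y$i*Y$j*(m+q*a)) \<le> ((1-q)*r+q) * (X$j*Y$i)"
          by (rule mult_left_mono[OF XjYi c0])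
        moreover have "((1-q)*r + q) * (m + q*a) * (Y$i * Y$j) = ((1-q)*r+q) * (Y$i*Y$j*(m+q*a))"
          by (simp only: ac_simps)
        ultimately show ?thesis by linarith
      qed
      finally show ?thesis using den by (simp add: \<rho>_def hr_def divide_le_eq)
    qed
    have B2: "\<rho> \<le> 1/q"
    proof -
      have "(\<theta> * X$i) * (\<theta> * Y$j) \<le> X$j * Y$i"
        using ratX[of i j] ratY[of j i] Xp Yp th by (intro mult_mono) (auto intro: less_imp_le)
      hence "q * (X$i * Y$j) \<le> X$j * Y$i" by (simp add: q_def power2_eq_square algebra_simps)
      hence "X$i * Y$j \<le> (1/q) * (X$j * Y$i)" using q by (simp add: field_simps)
      thus ?thesis using den by (simp add: \<rho>_def hr_def divide_le_eq)
    qed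
    have "ln \<rho> \<le> (1-\<epsilon>) * ln r"
      using scalar_contr[OF r1 q rho0 B1 B2] by (simp add: \<epsilon>_def)
    thus ?thesis using rho0 by (simp add: \<rho>_def r_def ln_le_iff_le_exp)
  qed
  have "hilbert_metric X Y \<le> (1-\<epsilon>) * d"
    by (rule hilbert_le[OF main]) (use contr_pos[OF pos x] contr_pos[OF pos y] in \<open>auto simp: X_def Y_def\<close>)
  thus ?thesis by (simp add: X_def Y_def \<epsilon>_def q_def d_def)
qed



fun prodm :: "(nat \<Rightarrow> real^'n^'n) \<Rightarrow> nat \<Rightarrow> real^'n^'n" where
  "prodm f 0 = mat 1"
| "prodm f (Suc j) = f j ** prodm f j"

lemma mm_nth: "(X ** Y) $ i $ k = (\<Sum>l\<in>UNIV. X$i$l * Y$l$k)"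
  by (simp add: matrix_matrix_mult_def)

lemma N_nth: "(mat 1 + h *\<^sub>R A) $ i $ l = (if i = l then 1 else 0) + h * A$i$l"
  by (simp add: mat_def)

lemma exp_lower_aux:
  fixes z :: real assumes "0 \<le> z" "z \<le> 1/2"
  shows "exp (-2*z) \<le> 1 - z"
proof -
  have "- z - 2 * z^2 \<le> ln (1 - z)" using ln_one_minus_pos_lower_bound[OF assms] .
  moreover have "2*z^2 \<le> z"
  proof -
    have "z * (2*z) \<le> z * 1" using assms by (intro mult_left_mono) auto
    thus ?thesis by (simp add: power2_eq_square)
  qed
  ultimately have "-2*z \<le> ln (1-z)" by linarith
  thus ?thesis using assms by (simp add: ln_ge_iff)
qed

locale blk =
  fixes A :: "nat \<Rightarrow> real^'n^'n" and B h \<delta> :: real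
  assumes Am: "\<And>j i l. i \<noteq> l \<Longrightarrow> 0 \<le> A j $i$l"
    and Ab: "\<And>j i l. \<bar>A j $i$l\<bar> \<le> B"
    and Ad: "\<And>j S. S \<noteq> {} \<Longrightarrow> S \<noteq> UNIV \<Longrightarrow> \<delta> \<le> (\<Sum>i\<in>-S. \<Sum>l\<in>S. A j $i$l)"
    and h0: "0 < h" and hB: "h * B \<le> 1/2"
begin

definition N where "N j = mat 1 + h *\<^sub>R A j"
definition Q where "Q j = prodm N j"

lemma B0: "0 \<le> B" using Ab[of 0 undefined undefined] by linarith

lemma N_nonneg: "0 \<le> N j $i$l"
proof (cases "i = l")
  case True
  have "-B \<le> A j $i$i" using Ab[of j i i] by linarith
  hence "h * (-B) \<le> h * A j $i$i" using h0 by (intro mult_left_mono) auto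
  thus ?thesis using True hB unfolding N_def N_nth by simp
next
  case False thus ?thesis using Am[OF False] h0 unfolding N_def N_nth by simp
qed

lemma N_diag: "1 - h*B \<le> N j $i$i"
proof -
  have "-B \<le> A j $i$i" using Ab[of j i i] by linarith
  hence "h * (-B) \<le> h * A j $i$i" using h0 by (intro mult_left_mono) auto
  thus ?thesis unfolding N_def N_nth by simp
qed

lemma Q_Suc: "Q (Suc j) = N j ** Q j" by (simp add: Q_def)

lemma Q_nonneg: "0 \<le> Q j $i$k"
proof (induction j arbitrary: i)
  case 0 thus ?case by (simp add: Q_def mat_def)
next
  case (Suc j)
  show ?case unfolding Q_Suc mm_nth using N_nonneg Suc by (intro sum_nonneg mult_nonneg_nonneg)
qed

lemma Q_upper: "Q j $i$k \<le> (1 + real CARD('n) * h * B)^j"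
proof (induction j arbitrary: i)
  case 0 thus ?case by (simp add: Q_def mat_def)
next
  case (Suc j)
  have "Q (Suc j) $i$k = (\<Sum>l\<in>UNIV. N j $i$l * Q j $l$k)" by (simp add: Q_Suc mm_nth)
  also have "\<dots> \<le> (\<Sum>l\<in>UNIV. N j $i$l * (1 + real CARD('n) * h * B)^j)"
    using Suc N_nonneg by (intro sum_mono mult_left_mono) auto
  also have "\<dots> = (\<Sum>l\<in>UNIV. N j $i$l) * (1 + real CARD('n) * h * B)^j"
    by (simp add: sum_distrib_right)
  also have "\<dots> \<le> (1 + real CARD('n) * h * B) * (1 + real CARD('n) * h * B)^j"
  proof (rule mult_right_mono)
    have "(\<Sum>l\<in>UNIV. N j $i$l) \<le> (\<Sum>l\<in>UNIV. (if i = l then 1 else 0) + h * B)"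
    proof (intro sum_mono)
      fix l
      have "h * A j $i$l \<le> h * B" using Ab[of j i l] h0 by (simp add: mult_left_mono)
      thus "N j $i$l \<le> (if i = l then 1 else 0) + h * B" unfolding N_def N_nth by simp
    qed
    also have "\<dots> = 1 + real CARD('n) * h * B" by (simp add: sum.distrib)
    finally show "(\<Sum>l\<in>UNIV. N j $i$l) \<le> 1 + real CARD('n) * h * B" .
    show "0 \<le> (1 + real CARD('n) * h * B)^j" using h0 B0 by simp
  qed
  finally show ?case by simp
qed

lemma Q_upper_exp: "Q j $i$k \<le> exp (real CARD('n) * B * (real j * h))"
proof -
  have "Q j $i$k \<le> (1 + real CARD('n) * h * B)^j" by (rule Q_upper)
  also have "\<dots> \<le> exp (real CARD('n) * h * B)^j"
    using h0 B0 by (intro power_mono) (auto simp: exp_ge_add_one_self)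
  also have "\<dots> = exp (real CARD('n) * B * (real j * h))"
  proof -
    have "exp (real CARD('n) * h * B)^j = exp (real j * (real CARD('n) * h * B))"
      by (rule exp_of_nat_mult[symmetric])
    also have "real j * (real CARD('n) * h * B) = real CARD('n) * B * (real j * h)" by simp
    finally show ?thesis .
  qed
  finally show ?thesis .
qed

definition c where "c = 1 - h*B"
lemma c_pos: "0 < c" and c_le: "c \<le> 1" and c_half: "1/2 \<le> c"
  using hB h0 B0 by (auto simp: c_def)

lemma Q_step:
  assumes "i \<notin> S"
  shows "c * Q j $i$k + h * (\<Sum>l\<in>S. A j $i$l * Q j $l$k) \<le> Q (Suc j) $i$k"
proof -
  have "Q (Suc j) $i$k = (\<Sum>l\<in>UNIV. N j $i$l * Q j $l$k)" by (simp add: Q_Suc mm_nth)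
  also have "\<dots> = N j $i$i * Q j $i$k + (\<Sum>l\<in>UNIV-{i}. N j $i$l * Q j $l$k)"
    by (rule sum.remove) auto
  finally have eq: "Q (Suc j) $i$k = N j $i$i * Q j $i$k + (\<Sum>l\<in>UNIV-{i}. N j $i$l * Q j $l$k)" .
  have "(\<Sum>l\<in>S. N j $i$l * Q j $l$k) \<le> (\<Sum>l\<in>UNIV-{i}. N j $i$l * Q j $l$k)"
    using assms N_nonneg Q_nonneg by (intro sum_mono2) auto
  moreover have "(\<Sum>l\<in>S. N j $i$l * Q j $l$k) = h * (\<Sum>l\<in>S. A j $i$l * Q j $l$k)"
  proof -
    have "(\<Sum>l\<in>S. N j $i$l * Q j $l$k) = (\<Sum>l\<in>S. h * (A j $i$l * Q j $l$k))"
    proof (rule sum.cong)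
      fix l assume "l \<in> S"
      hence "i \<noteq> l" using assms by auto
      thus "N j $i$l * Q j $l$k = h * (A j $i$l * Q j $l$k)" unfolding N_def N_nth by simp
    qed simp
    thus ?thesis by (simp add: sum_distrib_left)
  qed
  moreover have "c * Q j $i$k \<le> N j $i$i * Q j $i$k"
    using N_diag Q_nonneg by (auto simp: c_def intro: mult_right_mono)
  ultimately show ?thesis using eq by linarith
qed

definition w where "w k j i = Q j $i$k / c^j"

lemma w_nonneg: "0 \<le> w k j i" using Q_nonneg c_pos by (simp add: w_def)

lemma w_step:
  assumes "i \<notin> S"
  shows "w k j i + h * (\<Sum>l\<in>S. A j $i$l * w k j l) \<le> w k (Suc j) i"
proof -
  have cj: "0 < c^j" using c_pos by simp
  have s0: "0 \<le> (\<Sum>l\<in>S. A j $i$l * w k j l)"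
  proof (intro sum_nonneg mult_nonneg_nonneg)
    fix l assume "l \<in> S" thus "0 \<le> A j $i$l" using assms Am by (metis)
  qed (rule w_nonneg)
  have "(\<Sum>l\<in>S. A j $i$l * w k j l) = (\<Sum>l\<in>S. A j $i$l * Q j $l$k) / c^j"
    by (simp add: w_def sum_divide_distrib)
  hence e: "(\<Sum>l\<in>S. A j $i$l * Q j $l$k) = c^j * (\<Sum>l\<in>S. A j $i$l * w k j l)"
    using cj c_pos by (simp add: field_simps)
  have "h * (\<Sum>l\<in>S. A j $i$l * w k j l) \<le> (h / c) * (\<Sum>l\<in>S. A j $i$l * w k j l)"
    using s0 h0 c_pos c_le by (intro mult_right_mono) (auto simp: field_simps)
  have "w k j i + h * (\<Sum>l\<in>S. A j $i$l * w k j l)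
      \<le> w k j i + (h / c) * (\<Sum>l\<in>S. A j $i$l * w k j l)"
    using s0 h0 c_pos c_le by (intro add_left_mono mult_right_mono) (auto simp: field_simps)
  also have "\<dots> = (c * Q j $i$k + h * (\<Sum>l\<in>S. A j $i$l * Q j $l$k)) / c^(Suc j)"
    using cj c_pos by (simp add: e w_def field_simps)
  also have "\<dots> \<le> Q (Suc j) $i$k / c^(Suc j)"
    using Q_step[OF assms, of j k] c_pos by (simp add: divide_right_mono)
  finally show ?thesis by (simp add: w_def)
qed

lemma w_mono1: "w k j i \<le> w k (Suc j) i"
  using w_step[of i "{}" k j] by simp

lemma w_mono: "j \<le> j' \<Longrightarrow> w k j i \<le> w k j' i"
proof (induction j' rule: dec_induct)
  case base thus ?case by simp
next
  case (step j') thus ?case using w_mono1[of k j' i] by linarith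
qed

lemma w_zero: "w k 0 k = 1" by (simp add: w_def Q_def mat_def)

lemma stage_sum:
  assumes S: "S \<noteq> {}" "S \<noteq> UNIV" and C: "0 \<le> C"
    and lo: "\<And>l j. l \<in> S \<Longrightarrow> j1 \<le> j \<Longrightarrow> C \<le> w k j l"
  shows "real p * h * \<delta> * C \<le> (\<Sum>i\<in>-S. w k (j1 + p) i)"
proof (induction p)
  case 0 thus ?case using w_nonneg by (simp add: sum_nonneg)
next
  case (Suc p)
  let ?j = "j1 + p"
  have "(\<Sum>i\<in>-S. w k ?j i) + h * (\<Sum>i\<in>-S. \<Sum>l\<in>S. A ?j $i$l * w k ?j l)
      = (\<Sum>i\<in>-S. w k ?j i + h * (\<Sum>l\<in>S. A ?j $i$l * w k ?j l))"
    by (simp add: sum.distrib sum_distrib_left)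
  also have "\<dots> \<le> (\<Sum>i\<in>-S. w k (Suc ?j) i)"
    by (intro sum_mono w_step) auto
  finally have A1: "(\<Sum>i\<in>-S. w k ?j i) + h * (\<Sum>i\<in>-S. \<Sum>l\<in>S. A ?j $i$l * w k ?j l)
      \<le> (\<Sum>i\<in>-S. w k (Suc ?j) i)" .
  have "C * \<delta> \<le> C * (\<Sum>i\<in>-S. \<Sum>l\<in>S. A ?j $i$l)"
    by (rule mult_left_mono[OF Ad[OF S, of ?j] C])
  also have "\<dots> = (\<Sum>i\<in>-S. \<Sum>l\<in>S. A ?j $i$l * C)"
    by (simp add: sum_distrib_left mult.commute)
  also have "\<dots> \<le> (\<Sum>i\<in>-S. \<Sum>l\<in>S. A ?j $i$l * w k ?j l)"
  proof (intro sum_mono mult_left_mono)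
    fix i l assume "i \<in> -S" "l \<in> S"
    thus "C \<le> w k ?j l" using lo by auto
    have "i \<noteq> l" using \<open>i \<in> -S\<close> \<open>l \<in> S\<close> by auto
    thus "0 \<le> A ?j $i$l" using Am by metis
  qed
  finally have A2: "h * (C * \<delta>) \<le> h * (\<Sum>i\<in>-S. \<Sum>l\<in>S. A ?j $i$l * w k ?j l)"
    using h0 by (intro mult_left_mono) auto
  have "real (Suc p) * h * \<delta> * C = real p * h * \<delta> * C + h * (C * \<delta>)"
    by (simp add: algebra_simps)
  also have "\<dots> \<le> (\<Sum>i\<in>-S. w k (j1 + p) i) + h * (\<Sum>i\<in>-S. \<Sum>l\<in>S. A ?j $i$l * w k ?j l)"
    using Suc A2 by linarith
  also have "\<dots> \<le> (\<Sum>i\<in>-S. w k (j1 + Suc p) i)" using A1 by simp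
  finally show ?case .
qed

lemma exists_ge_avg:
  fixes f :: "'a \<Rightarrow> real"
  assumes "finite J" "J \<noteq> {}" "X \<le> (\<Sum>i\<in>J. f i)"
  shows "\<exists>i\<in>J. X / real (card J) \<le> f i"
proof (rule ccontr)
  assume "\<not> ?thesis"
  hence "\<And>i. i \<in> J \<Longrightarrow> f i < X / real (card J)" by auto
  hence "(\<Sum>i\<in>J. f i) < (\<Sum>i\<in>J. X / real (card J))"
    using assms by (intro sum_strict_mono) auto
  also have "\<dots> = X" using assms by simp
  finally show False using assms by linarith
qed

lemma stages:
  assumes d0: "0 < \<delta>" and p0: "0 < p" and m: "m \<le> CARD('n) - 1"
  defines "\<zeta> \<equiv> min 1 (real p * h * \<delta> / real CARD('n))"
  shows "\<exists>S. m < card S \<and> (\<forall>l\<in>S. \<forall>j. m * p \<le> j \<longrightarrow> \<zeta>^m \<le> w k j l)"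
  using m
proof (induction m)
  case 0
  have "\<forall>l\<in>{k}. \<forall>j. 0 * p \<le> j \<longrightarrow> \<zeta>^0 \<le> w k j l"
    using w_mono[of 0] w_zero by (metis power_0 singletonD zero_le)
  thus ?case by (intro exI[of _ "{k}"]) auto
next
  case (Suc m)
  have z0: "0 \<le> \<zeta>" using d0 h0 p0 by (simp add: \<zeta>_def)
  have z1: "\<zeta> \<le> 1" by (simp add: \<zeta>_def)
  obtain S where S: "m < card S" "\<And>l j. l \<in> S \<Longrightarrow> m * p \<le> j \<Longrightarrow> \<zeta>^m \<le> w k j l"
    using Suc by auto
  have zm: "\<zeta>^Suc m \<le> \<zeta>^m" using power_decreasing[of m "Suc m" \<zeta>] z0 z1 by simp
  show ?case
  proof (cases "Suc m < card S")
    case True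
    have "\<zeta>^Suc m \<le> w k j l" if "l \<in> S" "Suc m * p \<le> j" for l j
      using S(2)[of l j] that zm by simp
    thus ?thesis using True by blast
  next
    case False
    hence cS: "card S = Suc m" using S by simp
    have SU: "S \<noteq> UNIV" using cS Suc.prems
      by (metis card_UNIV_unit card_mono finite Suc_le_lessD diff_less less_le_not_le zero_less_one
          card.empty Nat.le_diff_conv2 One_nat_def card_gt_0_iff le_add1 not_less_eq_eq plus_1_eq_Suc)
    have Sne: "S \<noteq> {}" using cS by auto
    have "real p * h * \<delta> * \<zeta>^m \<le> (\<Sum>i\<in>-S. w k (m*p + p) i)"
      by (rule stage_sum[OF Sne SU]) (use z0 S in auto)
    from exists_ge_avg[OF _ _ this] obtain i where i: "i \<in> -S" and
      wi: "real p * h * \<delta> * \<zeta>^m / real (card (-S)) \<le> w k (m*p + p) i"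
      using SU by auto
    have "-S \<noteq> {}" using SU by auto
    hence cm: "0 < card (-S)" by (simp add: card_gt_0_iff)
    have cn: "card (-S) \<le> CARD('n)" by (rule card_mono) auto
    have X0: "0 \<le> real p * h * \<delta> * \<zeta>^m" using d0 h0 z0 by simp
    have "\<zeta>^Suc m = \<zeta> * \<zeta>^m" by simp
    also have "\<dots> \<le> (real p * h * \<delta> / real CARD('n)) * \<zeta>^m"
      using z0 by (intro mult_right_mono) (auto simp: \<zeta>_def)
    also have "\<dots> = real p * h * \<delta> * \<zeta>^m / real CARD('n)" by simp
    also have "\<dots> \<le> real p * h * \<delta> * \<zeta>^m / real (card (-S))"
      using X0 cm cn by (intro divide_left_mono) auto
    also have "\<dots> \<le> w k (m*p + p) i" by (rule wi)
    finally have wi2: "\<zeta>^Suc m \<le> w k (m*p + p) i" .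
    have "\<zeta>^Suc m \<le> w k j l" if "l \<in> insert i S" "Suc m * p \<le> j" for l j
    proof (cases "l = i")
      case True
      thus ?thesis using wi2 w_mono[of "m*p+p" j k i] that by (simp add: add.commute)
    next
      case False
      hence "l \<in> S" using that by auto
      thus ?thesis using S(2)[of l j] that zm by simp
    qed
    moreover have "Suc m < card (insert i S)" using i cS by (simp add: card_insert_if)
    ultimately show ?thesis by blast
  qed
qed

lemma Q_lower:
  assumes d0: "0 < \<delta>" and p0: "0 < p"
  shows "exp (-2 * B * (real (CARD('n) * p) * h)) * (min 1 (real p * h * \<delta> / real CARD('n)))^(CARD('n) - 1)
           \<le> Q (CARD('n) * p) $i$k"
proof -
  define \<zeta> where "\<zeta> = min 1 (real p * h * \<delta> / real CARD('n))"
  obtain S where S: "CARD('n) - 1 < card S"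
    "\<And>l j. l \<in> S \<Longrightarrow> (CARD('n) - 1) * p \<le> j \<Longrightarrow> \<zeta>^(CARD('n) - 1) \<le> w k j l"
    using stages[OF d0 p0 le_refl, of k] unfolding \<zeta>_def by blast
  have "card S = CARD('n)" using S(1) card_mono[of UNIV S] by simp
  hence "S = UNIV" by (metis card_subset_eq finite subset_UNIV)
  hence wl: "\<zeta>^(CARD('n) - 1) \<le> w k (CARD('n) * p) i" using S(2)[of i "CARD('n) * p"] by simp
  define q where "q = CARD('n) * p"
  have "exp (-2 * B * (real q * h)) = exp (-2 * (h*B)) ^ q"
    by (simp add: exp_of_nat_mult[symmetric] ac_simps)
  also have "\<dots> \<le> c ^ q" unfolding c_def using h0 B0 hB
    by (intro power_mono exp_lower_aux) auto
  finally have E: "exp (-2 * B * (real q * h)) \<le> c^q" .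
  have "exp (-2 * B * (real q * h)) * \<zeta>^(CARD('n) - 1) \<le> c^q * w k q i"
  proof (intro mult_mono)
    show "0 \<le> c^q" using c_pos by simp
    show "0 \<le> \<zeta>^(CARD('n) - 1)" using d0 h0 p0 by (simp add: \<zeta>_def)
  qed (use E wl in \<open>auto simp: q_def\<close>)
  also have "c^q * w k q i = Q q $i$k" using c_pos by (simp add: w_def)
  finally show ?thesis by (simp add: q_def \<zeta>_def)
qed

end



lemma mm_rdistrib: "((A::real^'n^'m) + B) ** C = A ** C + B ** C"
  by (simp add: matrix_matrix_mult_def vec_eq_iff distrib_right sum.distrib)

lemma mm_scaleR_left: "((c *\<^sub>R A)::real^'n^'m) ** C = c *\<^sub>R (A ** C)"
  by (simp add: matrix_matrix_mult_def vec_eq_iff sum_distrib_left mult_ac)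

lemma mm_scaleR_right: "(A::real^'n^'m) ** (c *\<^sub>R C) = c *\<^sub>R (A ** C)"
  by (simp add: matrix_matrix_mult_def vec_eq_iff sum_distrib_left mult_ac)

lemma bilinear_mm: "bilinear ((**) :: real^'n^'m \<Rightarrow> real^'k^'n \<Rightarrow> real^'k^'m)"
  unfolding bilinear_def
  by (auto intro!: linearI simp: matrix_add_ldistrib mm_rdistrib mm_scaleR_left mm_scaleR_right)

lemma mm_bound_exists: "\<exists>K>0. \<forall>A X :: real^'n^'n. norm (A ** X) \<le> K * norm A * norm X"
  using bilinear_bounded_pos[OF bilinear_mm] by blast

lemma integral_power:
  fixes r :: real assumes "0 \<le> r"
  shows "((\<lambda>u. u^k) has_integral (r^(Suc k) / real (Suc k))) {0..r}"
proof -
  have "((\<lambda>u. u^k) has_integral ((\<lambda>u. u^(Suc k) / real (Suc k)) r - (\<lambda>u. u^(Suc k) / real (Suc k)) 0)) {0..r}"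
  proof (rule fundamental_theorem_of_calculus[OF assms])
    fix x :: real assume "x \<in> {0..r}"
    have "((\<lambda>u. u^(Suc k)) has_real_derivative (real (Suc k) * x^k)) (at x)"
      using DERIV_pow[of "Suc k" x] by simp
    hence "((\<lambda>u. u^(Suc k) / real (Suc k)) has_real_derivative (real (Suc k) * x^k / real (Suc k))) (at x)"
      by (rule DERIV_cdivide)
    hence "((\<lambda>u. u^(Suc k) / real (Suc k)) has_real_derivative (real (Suc k) * x^k / real (Suc k))) (at x within {0..r})"
      by (rule has_field_derivative_at_within)
    thus "((\<lambda>u. u^(Suc k) / real (Suc k)) has_vector_derivative x^k) (at x within {0..r})"
      by (simp add: has_real_derivative_iff_has_vector_derivative[symmetric])
  qed
  thus ?thesis by simp
qed

locale ctrl =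
  fixes t :: real and M :: "real \<Rightarrow> real^'n^'n" and B K :: real
  assumes t0: "0 \<le> t" and meas: "M \<in> borel_measurable (lebesgue_on {0..t})"
    and Mb: "\<And>s. s \<in> {0..t} \<Longrightarrow> norm (M s) \<le> B"
    and K0: "0 < K" and Kb: "\<And>(A::real^'n^'n) (X::real^'n^'n). norm (A ** X) \<le> K * norm A * norm X"
begin

lemma B0: "0 \<le> B" using Mb[of 0] t0 by (meson atLeastAtMost_iff norm_ge_zero order.trans order_refl)

lemma Mb': "s \<in> {0..t} \<Longrightarrow> norm (M s ** (X::real^'n^'n)) \<le> K * B * norm X"
  using Kb[of "M s" X] Mb[of s] K0 by (meson mult_left_mono mult_right_mono norm_ge_zero order.trans less_imp_le)

lemma M_absint: "M absolutely_integrable_on {0..t}"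
  by (rule measurable_bounded_by_integrable_imp_absolutely_integrable[OF meas, where g="\<lambda>_. B"])
     (use Mb in auto)

lemma M_int: "{a..b} \<subseteq> {0..t} \<Longrightarrow> M integrable_on {a..b}"
  using M_absint integrable_on_subinterval absolutely_integrable_on_def by blast

lemma prod_int:
  assumes X: "continuous_on {0..t} X" and sub: "{a..b} \<subseteq> {0..t}"
  shows "(\<lambda>u. M u ** X u) integrable_on {a..b}"
proof -
  have "(\<lambda>u. M u ** X u) absolutely_integrable_on {0..t}"
  proof (rule absolutely_integrable_bounded_measurable_product[OF bilinear_mm meas])
    show "bounded (M ` {0..t})" using Mb unfolding bounded_iff by (intro exI[of _ B]) auto
    show "X absolutely_integrable_on {0..t}"
      using absolutely_integrable_continuous[of 0 t X] X by (simp add: cbox_interval)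
  qed simp
  thus ?thesis using sub integrable_on_subinterval absolutely_integrable_on_def by blast
qed

lemma mm_diff_right: "(A::real^'n^'n) ** (X - Y) = A ** X - A ** Y"
  by (simp add: matrix_matrix_mult_def vec_eq_iff right_diff_distrib sum_subtractf)

primrec pic :: "nat \<Rightarrow> real \<Rightarrow> real^'n^'n" where
  "pic 0 = (\<lambda>r. mat 1)"
| "pic (Suc k) = (\<lambda>r. mat 1 + integral {0..r} (\<lambda>u. M u ** pic k u))"

lemma pic_cont: "continuous_on {0..t} (pic k)"
proof (induction k)
  case 0 thus ?case by simp
next
  case (Suc k)
  have "continuous_on {0..t} (\<lambda>r. integral {0..r} (\<lambda>u. M u ** pic k u))"
    by (rule indefinite_integral_continuous_1[OF prod_int[OF Suc]]) simp
  thus ?case by (simp add: continuous_on_add)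
qed

definition Cn where "Cn = norm (mat 1 :: real^'n^'n)"
definition L where "L = K * B"

lemma L0: "0 \<le> L" using K0 B0 by (simp add: L_def)

lemma pic_diff:
  assumes "r \<in> {0..t}"
  shows "norm (pic (Suc k) r - pic k r) \<le> Cn * (L*r)^(Suc k) / fact (Suc k)"
  using assms
proof (induction k arbitrary: r)
  case 0
  have sub: "{0..r} \<subseteq> {0..t}" using 0 by auto
  have "norm (pic (Suc 0) r - pic 0 r) = norm (integral {0..r} (\<lambda>u. M u ** mat 1))" by simp
  also have "\<dots> \<le> integral {0..r} (\<lambda>u. K * B * Cn)"
  proof (rule integral_norm_bound_integral)
    show "(\<lambda>u. M u ** mat 1) integrable_on {0..r}"
      using prod_int[of "\<lambda>_. mat 1", OF _ sub] by simp
    show "(\<lambda>u. K * B * Cn) integrable_on {0..r}" by (intro integrable_continuous_interval continuous_intros)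
    fix u assume "u \<in> {0..r}"
    thus "norm (M u ** mat 1) \<le> K * B * Cn" using Mb'[of u "mat 1"] sub by (auto simp: Cn_def)
  qed
  also have "\<dots> = Cn * (L*r)^(Suc 0) / fact (Suc 0)" using 0 by (simp add: L_def)
  finally show ?case .
next
  case (Suc k)
  have sub: "{0..r} \<subseteq> {0..t}" using Suc.prems by auto
  have r0: "0 \<le> r" using Suc.prems by auto
  have i1: "(\<lambda>u. M u ** pic (Suc k) u) integrable_on {0..r}" by (rule prod_int[OF pic_cont sub])
  have i2: "(\<lambda>u. M u ** pic k u) integrable_on {0..r}" by (rule prod_int[OF pic_cont sub])
  define c where "c = K * B * Cn * L^(Suc k) / fact (Suc k)"
  have "pic (Suc (Suc k)) r - pic (Suc k) r
      = integral {0..r} (\<lambda>u. M u ** pic (Suc k) u) - integral {0..r} (\<lambda>u. M u ** pic k u)"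
    by simp
  also have "\<dots> = integral {0..r} (\<lambda>u. M u ** (pic (Suc k) u - pic k u))"
    using integral_diff[OF i1 i2] by (simp add: mm_diff_right)
  finally have eq: "pic (Suc (Suc k)) r - pic (Suc k) r = integral {0..r} (\<lambda>u. M u ** (pic (Suc k) u - pic k u))" .
  have hi: "((\<lambda>u. c * u^(Suc k)) has_integral (c * (r^(Suc (Suc k)) / real (Suc (Suc k))))) {0..r}"
    by (rule has_integral_mult_right[OF integral_power[OF r0]])
  have "norm (integral {0..r} (\<lambda>u. M u ** (pic (Suc k) u - pic k u))) \<le> integral {0..r} (\<lambda>u. c * u^(Suc k))"
  proof (rule integral_norm_bound_integral)
    show "(\<lambda>u. M u ** (pic (Suc k) u - pic k u)) integrable_on {0..r}"
      using integrable_diff[OF i1 i2] by (simp add: mm_diff_right)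
    show "(\<lambda>u. c * u^(Suc k)) integrable_on {0..r}" using hi by blast
    fix u assume u: "u \<in> {0..r}"
    hence ut: "u \<in> {0..t}" using sub by auto
    have "norm (M u ** (pic (Suc k) u - pic k u)) \<le> K * B * norm (pic (Suc k) u - pic k u)"
      by (rule Mb'[OF ut])
    also have "\<dots> \<le> K * B * (Cn * (L*u)^(Suc k) / fact (Suc k))"
      using Suc.IH[OF ut] K0 B0 by (intro mult_left_mono) auto
    also have "\<dots> = c * u^(Suc k)" by (simp add: c_def power_mult_distrib)
    finally show "norm (M u ** (pic (Suc k) u - pic k u)) \<le> c * u^(Suc k)" .
  qed
  also have "\<dots> = c * (r^(Suc (Suc k)) / real (Suc (Suc k)))" using hi by (rule integral_unique)
  also have "\<dots> = Cn * (L*r)^(Suc (Suc k)) / fact (Suc (Suc k))"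
    by (simp add: c_def L_def power_mult_distrib fact_Suc[of "Suc k"] field_simps)
  finally show ?case using eq by simp
qed

definition D where "D k r = pic (Suc k) r - pic k r"
definition Phi where "Phi r = mat 1 + (\<Sum>i. D i r)"
definition bnd where "bnd i = Cn * (L*t)^(Suc i) / fact (Suc i)"

lemma pic_sum: "pic n r = mat 1 + (\<Sum>i<n. D i r)"
  by (induction n) (auto simp: D_def simp del: pic.simps(2))

lemma D_bnd: "r \<in> {0..t} \<Longrightarrow> norm (D i r) \<le> bnd i"
proof -
  assume r: "r \<in> {0..t}"
  have "norm (D i r) \<le> Cn * (L*r)^(Suc i) / fact (Suc i)" using pic_diff[OF r] by (simp add: D_def)
  also have "\<dots> \<le> bnd i" unfolding bnd_def using r L0
    by (intro divide_right_mono mult_left_mono power_mono) (auto simp: Cn_def mult_left_mono)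
  finally show ?thesis .
qed

lemma bnd_summable: "summable bnd"
proof -
  have "summable (\<lambda>n. inverse (fact n) * (L*t)^n)" by (rule summable_exp)
  hence "summable (\<lambda>n. inverse (fact (Suc n)) * (L*t)^(Suc n))" by (subst summable_Suc_iff)
  hence "summable (\<lambda>n. Cn * (inverse (fact (Suc n)) * (L*t)^(Suc n)))" by (rule summable_mult)
  moreover have "bnd = (\<lambda>n. Cn * (inverse (fact (Suc n)) * (L*t)^(Suc n)))"
    by (rule ext) (simp only: bnd_def divide_inverse ac_simps)
  ultimately show ?thesis by simp
qed

lemma ul_sum: "uniform_limit {0..t} (\<lambda>n r. \<Sum>i<n. D i r) (\<lambda>r. \<Sum>i. D i r) sequentially"
  by (rule Weierstrass_m_test[OF D_bnd bnd_summable])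

lemma ul_pic: "uniform_limit {0..t} pic Phi sequentially"
proof (rule uniform_limitI)
  fix e :: real assume "0 < e"
  from uniform_limitD[OF ul_sum this]
  show "\<forall>\<^sub>F n in sequentially. \<forall>x\<in>{0..t}. dist (pic n x) (Phi x) < e"
    by (simp add: pic_sum Phi_def dist_norm)
qed

lemma Phi_cont: "continuous_on {0..t} Phi"
  by (rule uniform_limit_theorem[OF _ ul_pic]) (auto intro: always_eventually pic_cont)

lemma Phi_eq:
  assumes s: "s \<in> {0..t}"
  shows "((\<lambda>u. M u ** Phi u) has_integral (Phi s - mat 1)) {0..s}"
proof -
  have sub: "{0..s} \<subseteq> {0..t}" using s by auto
  have iP: "(\<lambda>u. M u ** Phi u) integrable_on {0..s}" by (rule prod_int[OF Phi_cont sub])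
  define I where "I = integral {0..s} (\<lambda>u. M u ** Phi u)"
  have small: "norm (Phi s - (mat 1 + I)) < e" if e: "0 < e" for e
  proof -
    define e' where "e' = e / (2 * (1 + K*B*t))"
    have kbt: "0 \<le> K*B*t" using K0 B0 t0 by simp
    have e'0: "0 < e'" using e kbt by (simp add: e'_def)
    have "\<exists>N. \<forall>n\<ge>N. \<forall>x\<in>{0..t}. norm (pic n x - Phi x) < e'"
      using uniform_limitD[OF ul_pic e'0] by (simp add: eventually_sequentially dist_norm)
    then obtain N where N0: "\<forall>n\<ge>N. \<forall>x\<in>{0..t}. norm (pic n x - Phi x) < e'" by blast
    have N: "\<And>n r. N \<le> n \<Longrightarrow> r \<in> {0..t} \<Longrightarrow> norm (pic n r - Phi r) < e'"
      using N0 by blast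
    have i1: "(\<lambda>u. M u ** pic N u) integrable_on {0..s}" by (rule prod_int[OF pic_cont sub])
    have "pic (Suc N) s - (mat 1 + I) = integral {0..s} (\<lambda>u. M u ** pic N u) - I" by simp
    also have "\<dots> = integral {0..s} (\<lambda>u. M u ** (pic N u - Phi u))"
      using integral_diff[OF i1 iP] by (simp add: mm_diff_right I_def)
    finally have eq: "pic (Suc N) s - (mat 1 + I) = integral {0..s} (\<lambda>u. M u ** (pic N u - Phi u))" .
    have "norm (integral {0..s} (\<lambda>u. M u ** (pic N u - Phi u))) \<le> integral {0..s} (\<lambda>u. K*B*e')"
    proof (rule integral_norm_bound_integral)
      show "(\<lambda>u. M u ** (pic N u - Phi u)) integrable_on {0..s}"
        using integrable_diff[OF i1 iP] by (simp add: mm_diff_right)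
      show "(\<lambda>u. K*B*e') integrable_on {0..s}" by (intro integrable_continuous_interval continuous_intros)
      fix u assume "u \<in> {0..s}"
      hence ut: "u \<in> {0..t}" using sub by auto
      have "norm (M u ** (pic N u - Phi u)) \<le> K*B*norm (pic N u - Phi u)" by (rule Mb'[OF ut])
      also have "\<dots> \<le> K*B*e'" using N[OF le_refl ut] K0 B0 by (intro mult_left_mono) auto
      finally show "norm (M u ** (pic N u - Phi u)) \<le> K*B*e'" .
    qed
    also have "\<dots> = s * (K*B*e')" using s by simp
    also have "\<dots> \<le> t * (K*B*e')" using s K0 B0 e'0 by (intro mult_right_mono) auto
    finally have A: "norm (pic (Suc N) s - (mat 1 + I)) \<le> t * (K*B*e')" using eq by simp
    have Bn: "norm (Phi s - pic (Suc N) s) < e'" using N[of "Suc N" s] s by (simp add: norm_minus_commute)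
    have "norm (Phi s - (mat 1 + I)) \<le> norm (Phi s - pic (Suc N) s) + norm (pic (Suc N) s - (mat 1 + I))"
      using dist_triangle[of "Phi s" "mat 1 + I" "pic (Suc N) s"] by (simp only: dist_norm)
    also have "\<dots> < e' + t * (K*B*e')" using A Bn by linarith
    also have "\<dots> = e' * (1 + K*B*t)" by (simp add: algebra_simps)
    also have "\<dots> = e / 2"
    proof -
      have p: "0 < 1 + K*B*t" using kbt by linarith
      have "e' * (1 + K*B*t) = e * ((1 + K*B*t) / (2 * (1 + K*B*t)))" by (simp add: e'_def)
      also have "(1 + K*B*t) / (2 * (1 + K*B*t)) = 1/2" using p by simp
      finally show ?thesis by simp
    qed
    also have "\<dots> < e" using e by simp
    finally show ?thesis .
  qed
  have "norm (Phi s - (mat 1 + I)) = 0"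
  proof (rule ccontr)
    assume "norm (Phi s - (mat 1 + I)) \<noteq> 0"
    hence "0 < norm (Phi s - (mat 1 + I))" by simp
    from small[OF this] show False by simp
  qed
  hence "Phi s - mat 1 = I" by (simp add: algebra_simps)
  thus ?thesis using iP by (simp add: I_def has_integral_integrable_integral)
qed

lemma Phi_fs: "is_fundamental_solution t M Phi"
  unfolding is_fundamental_solution_def using Phi_cont Phi_eq by blast

lemma bl_right: "bounded_linear (\<lambda>X::real^'n^'n. X ** (C::real^'n^'n))"
  using bilinear_mm[where 'n='n and 'm='n and 'k='n] unfolding bilinear_conv_bounded_bilinear
  by (rule bounded_bilinear.bounded_linear_left)

context
  fixes \<Psi> assumes fs: "is_fundamental_solution t M \<Psi>"
begin

lemma Psi_cont: "continuous_on {0..t} \<Psi>" using fs by (simp add: is_fundamental_solution_def)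

lemma Psi_int0: "s \<in> {0..t} \<Longrightarrow> ((\<lambda>u. M u ** \<Psi> u) has_integral (\<Psi> s - mat 1)) {0..s}"
  using fs by (simp add: is_fundamental_solution_def)

lemma Psi_0: "\<Psi> 0 = mat 1"
proof -
  have "((\<lambda>u. M u ** \<Psi> u) has_integral (\<Psi> 0 - mat 1)) {0..0}" using Psi_int0[of 0] t0 by simp
  moreover have "((\<lambda>u. M u ** \<Psi> u) has_integral 0) {0..(0::real)}"
    using has_integral_refl(1)[of "\<lambda>u. M u ** \<Psi> u" "0::real"] by (simp add: cbox_interval)
  ultimately have "\<Psi> 0 - mat 1 = 0" by (rule has_integral_unique)
  thus ?thesis by simp
qed

lemma Psi_int:
  assumes "0 \<le> a" "a \<le> b" "b \<le> t"
  shows "((\<lambda>u. M u ** \<Psi> u) has_integral (\<Psi> b - \<Psi> a)) {a..b}"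
proof -
  have "(\<lambda>u. M u ** \<Psi> u) integrable_on {a..b}" by (rule prod_int[OF Psi_cont]) (use assms in auto)
  then obtain J where J: "((\<lambda>u. M u ** \<Psi> u) has_integral J) {a..b}" by blast
  have "((\<lambda>u. M u ** \<Psi> u) has_integral ((\<Psi> a - mat 1) + J)) {0..b}"
    by (rule has_integral_combine[OF assms(1,2) Psi_int0 J]) (use assms in auto)
  moreover have "((\<lambda>u. M u ** \<Psi> u) has_integral (\<Psi> b - mat 1)) {0..b}"
    by (rule Psi_int0) (use assms in auto)
  ultimately have "(\<Psi> a - mat 1) + J = \<Psi> b - mat 1" by (rule has_integral_unique)
  hence "J = \<Psi> b - \<Psi> a" by (simp add: algebra_simps)
  thus ?thesis using J by simp
qed

lemma Psi_bounded: "\<exists>C0>0. \<forall>r\<in>{0..t}. norm (\<Psi> r) \<le> C0"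
proof -
  have "bounded (\<Psi> ` {0..t})"
    by (rule compact_imp_bounded[OF compact_continuous_image[OF Psi_cont compact_Icc]])
  thus ?thesis by (auto simp: bounded_pos)
qed

definition C0 where "C0 = (SOME C0. C0 > 0 \<and> (\<forall>r\<in>{0..t}. norm (\<Psi> r) \<le> C0))"

lemma C0: "0 < C0" "\<And>r. r \<in> {0..t} \<Longrightarrow> norm (\<Psi> r) \<le> C0"
  using someI_ex[OF Psi_bounded] unfolding C0_def by auto

lemma Psi_lip:
  assumes "0 \<le> a" "a \<le> b" "b \<le> t"
  shows "norm (\<Psi> b - \<Psi> a) \<le> L * C0 * (b - a)"
proof -
  have "norm (\<Psi> b - \<Psi> a) \<le> (L * C0) * measure lborel (cbox a b)"
  proof (rule has_integral_bound)
    show "0 \<le> L * C0" using L0 C0 by simp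
    show "((\<lambda>u. M u ** \<Psi> u) has_integral (\<Psi> b - \<Psi> a)) (cbox a b)"
      using Psi_int[OF assms] by (simp add: cbox_interval)
    fix u assume "u \<in> cbox a b"
    hence u: "u \<in> {0..t}" using assms by (auto simp: cbox_interval)
    have "norm (M u ** \<Psi> u) \<le> K * B * norm (\<Psi> u)" by (rule Mb'[OF u])
    also have "\<dots> \<le> K * B * C0" using C0(2)[OF u] K0 B0 by (intro mult_left_mono) auto
    finally show "norm (M u ** \<Psi> u) \<le> L * C0" by (simp add: L_def)
  qed
  thus ?thesis using assms by simp
qed

end

definition G where "G a b = integral {a..b} M"

lemma G_int: "0 \<le> a \<Longrightarrow> a \<le> b \<Longrightarrow> b \<le> t \<Longrightarrow> (M has_integral G a b) {a..b}"
  unfolding G_def by (rule integrable_integral[OF M_int]) auto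

lemma G_bound:
  assumes "0 \<le> a" "a \<le> b" "b \<le> t"
  shows "norm (G a b) \<le> B * (b - a)"
proof -
  have "norm (G a b) \<le> B * measure lborel (cbox a b)"
    by (rule has_integral_bound[OF B0]) (use G_int[OF assms] Mb assms in \<open>auto simp: cbox_interval\<close>)
  thus ?thesis using assms by simp
qed

lemma local_err:
  assumes fs: "is_fundamental_solution t M \<Psi>" and "0 \<le> a" "a \<le> b" "b \<le> t"
  shows "norm (\<Psi> b - (mat 1 + G a b) ** \<Psi> a) \<le> L * (L * C0 \<Psi> * (b - a)) * (b - a)"
proof -
  have i1: "((\<lambda>u. M u ** \<Psi> u) has_integral (\<Psi> b - \<Psi> a)) {a..b}" by (rule Psi_int[OF fs assms(2-)])
  have i2: "((\<lambda>u. M u ** \<Psi> a) has_integral (G a b ** \<Psi> a)) {a..b}"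
    using has_integral_linear[OF G_int[OF assms(2-)] bl_right[of "\<Psi> a"]] by (simp add: o_def)
  have "((\<lambda>u. M u ** (\<Psi> u - \<Psi> a)) has_integral (\<Psi> b - \<Psi> a - G a b ** \<Psi> a)) {a..b}"
    using has_integral_diff[OF i1 i2] by (simp add: mm_diff_right)
  moreover have "\<Psi> b - \<Psi> a - G a b ** \<Psi> a = \<Psi> b - (mat 1 + G a b) ** \<Psi> a"
    by (simp only: mm_rdistrib matrix_mul_lid diff_diff_eq)
  ultimately have i3: "((\<lambda>u. M u ** (\<Psi> u - \<Psi> a)) has_integral (\<Psi> b - (mat 1 + G a b) ** \<Psi> a)) (cbox a b)"
    by (simp only: cbox_interval)
  have "norm (\<Psi> b - (mat 1 + G a b) ** \<Psi> a) \<le> (L * (L * C0 \<Psi> * (b - a))) * measure lborel (cbox a b)"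
  proof (rule has_integral_bound[OF _ i3])
    show "0 \<le> L * (L * C0 \<Psi> * (b - a))" using L0 C0(1)[OF fs] assms by simp
    fix u assume "u \<in> cbox a b"
    hence u: "u \<in> {0..t}" "a \<le> u" "u \<le> b" using assms by (auto simp: cbox_interval)
    have "norm (M u ** (\<Psi> u - \<Psi> a)) \<le> K * B * norm (\<Psi> u - \<Psi> a)" by (rule Mb'[OF u(1)])
    also have "\<dots> \<le> K * B * (L * C0 \<Psi> * (b - a))"
    proof (intro mult_left_mono)
      have "norm (\<Psi> u - \<Psi> a) \<le> L * C0 \<Psi> * (u - a)" by (rule Psi_lip[OF fs]) (use u assms in auto)
      also have "\<dots> \<le> L * C0 \<Psi> * (b - a)" using u L0 C0(1)[OF fs] by (intro mult_left_mono) auto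
      finally show "norm (\<Psi> u - \<Psi> a) \<le> L * C0 \<Psi> * (b - a)" .
    qed (use K0 B0 in auto)
    finally show "norm (M u ** (\<Psi> u - \<Psi> a)) \<le> L * (L * C0 \<Psi> * (b - a))" by (simp add: L_def)
  qed
  thus ?thesis using assms by simp
qed

definition hk where "hk k = t / real k"
definition Ek where "Ek k j = mat 1 + G (real j * hk k) (real (Suc j) * hk k)"

lemma euler_err:
  assumes fs: "is_fundamental_solution t M \<Psi>" and k: "0 < k"
  shows "j \<le> k \<Longrightarrow> norm (\<Psi> (real j * hk k) - prodm (Ek k) j)
           \<le> real j * (L*L*C0 \<Psi> * hk k^2) * (1 + K*B*hk k)^j"
proof (induction j)
  case 0 thus ?case using Psi_0[OF fs] by simp
next
  case (Suc j)
  define hh where "hh = hk k"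
  define a where "a = real j * hh"
  define b where "b = real (Suc j) * hh"
  define c where "c = L*L*C0 \<Psi> * hh^2"
  define \<rho> where "\<rho> = 1 + K*B*hh"
  have hh0: "0 \<le> hh" using t0 by (simp add: hh_def hk_def)
  have a0: "0 \<le> a" using hh0 by (simp add: a_def)
  have ab: "a \<le> b" using hh0 by (simp add: a_def b_def mult_right_mono)
  have bt: "b \<le> t"
  proof -
    have "b = real (Suc j) * t / real k" by (simp add: b_def hh_def hk_def)
    also have "\<dots> \<le> real k * t / real k" using Suc.prems t0 by (intro divide_right_mono mult_right_mono) auto
    also have "\<dots> = t" using k by simp
    finally show ?thesis .
  qed
  have ba: "b - a = hh" by (simp add: a_def b_def algebra_simps)
  have c0: "0 \<le> c" using L0 C0(1)[OF fs] by (simp add: c_def)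
  have rho1: "1 \<le> \<rho>" using K0 B0 hh0 by (simp add: \<rho>_def)
  define e where "e = \<Psi> a - prodm (Ek k) j"
  have IH: "norm e \<le> real j * c * \<rho>^j"
    using Suc.IH Suc.prems by (simp add: e_def a_def c_def \<rho>_def hh_def)
  have Ekj: "Ek k j = mat 1 + G a b" by (simp add: Ek_def a_def b_def hh_def)
  have s1: "prodm (Ek k) (Suc j) = Ek k j ** prodm (Ek k) j" by simp
  have s2: "Ek k j ** \<Psi> a - Ek k j ** prodm (Ek k) j = Ek k j ** e"
    unfolding e_def by (rule mm_diff_right[symmetric])
  have s3: "Ek k j ** e = e + G a b ** e" unfolding Ekj by (simp only: mm_rdistrib matrix_mul_lid)
  have s4: "\<Psi> b - Ek k j ** prodm (Ek k) j = (\<Psi> b - Ek k j ** \<Psi> a) + (Ek k j ** \<Psi> a - Ek k j ** prodm (Ek k) j)"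
    by simp
  have split: "\<Psi> b - prodm (Ek k) (Suc j) = (\<Psi> b - Ek k j ** \<Psi> a) + (e + G a b ** e)"
    using s1 s2 s3 s4 by simp
  have loc: "norm (\<Psi> b - Ek k j ** \<Psi> a) \<le> c"
    using local_err[OF fs a0 ab bt] by (simp add: Ekj ba c_def power2_eq_square mult_ac)
  have "norm (G a b ** e) \<le> K * norm (G a b) * norm e" by (rule Kb)
  also have "\<dots> \<le> K * (B * hh) * norm e"
    using G_bound[OF a0 ab bt] K0 by (intro mult_right_mono mult_left_mono) (auto simp: ba)
  finally have Ge: "norm (G a b ** e) \<le> K * B * hh * norm e" by simp
  have "norm (\<Psi> b - prodm (Ek k) (Suc j)) \<le> c + (norm e + K*B*hh * norm e)"
    unfolding split using loc Ge norm_triangle_ineq[of "\<Psi> b - Ek k j ** \<Psi> a" "e + G a b ** e"]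
      norm_triangle_ineq[of e "G a b ** e"] by linarith
  also have "\<dots> = c + \<rho> * norm e" by (simp add: \<rho>_def algebra_simps)
  also have "\<dots> \<le> c + \<rho> * (real j * c * \<rho>^j)" using IH rho1 by (intro add_left_mono mult_left_mono) auto
  also have "\<dots> \<le> c * \<rho>^(Suc j) + real j * c * \<rho>^(Suc j)"
  proof -
    have "c * 1 \<le> c * \<rho>^(Suc j)" using c0 rho1 by (intro mult_left_mono one_le_power) auto
    thus ?thesis by (simp add: algebra_simps)
  qed
  also have "\<dots> = real (Suc j) * c * \<rho>^(Suc j)" by (simp add: algebra_simps)
  finally show ?case by (simp add: b_def c_def \<rho>_def hh_def)
qed

lemma euler_final:
  assumes fs: "is_fundamental_solution t M \<Psi>" and k: "0 < k"
  shows "norm (\<Psi> t - prodm (Ek k) k) \<le> (L*L*C0 \<Psi>*t^2 / real k) * exp(K*B*t)"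
proof -
  have e: "norm (\<Psi> (real k * hk k) - prodm (Ek k) k) \<le> real k * (L*L*C0 \<Psi> * hk k^2) * (1 + K*B*hk k)^k"
    by (rule euler_err[OF fs k le_refl])
  have kh: "real k * hk k = t" using k by (simp add: hk_def)
  have "(1 + K*B*hk k)^k \<le> exp (K*B*hk k)^k"
    using K0 B0 t0 by (intro power_mono) (auto simp: hk_def)
  also have "\<dots> = exp (K*B*t)"
  proof -
    have "exp (K*B*hk k)^k = exp (real k * (K*B*hk k))" by (rule exp_of_nat_mult[symmetric])
    also have "real k * (K*B*hk k) = K*B*(real k * hk k)" by simp
    finally show ?thesis using kh by simp
  qed
  finally have p: "(1 + K*B*hk k)^k \<le> exp (K*B*t)" .
  have "real k * (L*L*C0 \<Psi> * hk k^2) = L*L*C0 \<Psi>*t^2 / real k"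
    using k by (simp add: hk_def power2_eq_square)
  moreover have nn: "0 \<le> L*L*C0 \<Psi>*t^2 / real k" using C0(1)[OF fs] by simp
  ultimately have "real k * (L*L*C0 \<Psi> * hk k^2) * (1 + K*B*hk k)^k \<le> L*L*C0 \<Psi>*t^2 / real k * exp (K*B*t)"
    using mult_left_mono[OF p nn] by (simp only:)
  thus ?thesis using e kh by simp
qed

lemma fs_unique:
  assumes f1: "is_fundamental_solution t M \<Psi>1" and f2: "is_fundamental_solution t M \<Psi>2"
  shows "\<Psi>1 t = \<Psi>2 t"
proof -
  define C where "C = (L*L*C0 \<Psi>1*t^2) * exp(K*B*t) + (L*L*C0 \<Psi>2*t^2) * exp(K*B*t)"
  have b: "norm (\<Psi>1 t - \<Psi>2 t) \<le> C / real k" if k: "0 < k" for k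
  proof -
    have "norm (\<Psi>1 t - \<Psi>2 t) \<le> norm (\<Psi>1 t - prodm (Ek k) k) + norm (\<Psi>2 t - prodm (Ek k) k)"
      using dist_triangle[of "\<Psi>1 t" "\<Psi>2 t" "prodm (Ek k) k"] by (simp add: dist_norm norm_minus_commute)
    also have "\<dots> \<le> (L*L*C0 \<Psi>1*t^2 / real k) * exp(K*B*t) + (L*L*C0 \<Psi>2*t^2 / real k) * exp(K*B*t)"
      using euler_final[OF f1 k] euler_final[OF f2 k] by linarith
    also have "\<dots> = C / real k" by (simp add: C_def add_divide_distrib)
    finally show ?thesis .
  qed
  have "norm (\<Psi>1 t - \<Psi>2 t) = 0"
  proof (rule ccontr)
    assume "norm (\<Psi>1 t - \<Psi>2 t) \<noteq> 0"
    hence x0: "0 < norm (\<Psi>1 t - \<Psi>2 t)" by simp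
    obtain n where n: "max 1 (C / norm (\<Psi>1 t - \<Psi>2 t)) < real n" using reals_Archimedean2 by blast
    hence n0: "0 < n" by simp
    have "C / norm (\<Psi>1 t - \<Psi>2 t) < real n" using n by simp
    hence "C < real n * norm (\<Psi>1 t - \<Psi>2 t)" using x0 by (simp add: divide_less_eq mult.commute)
    hence "C / real n < norm (\<Psi>1 t - \<Psi>2 t)" using n0 by (simp add: divide_less_eq mult.commute)
    thus False using b[OF n0] by linarith
  qed
  thus ?thesis by simp
qed

lemma resolvent_eq:
  assumes "is_fundamental_solution t M \<Psi>"
  shows "resolvent t M = \<Psi> t"
  unfolding resolvent_def
proof (rule the_equality)
  show "\<exists>Phi. is_fundamental_solution t M Phi \<and> Phi t = \<Psi> t" using assms by blast
  fix A assume "\<exists>Phi. is_fundamental_solution t M Phi \<and> Phi t = A"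
  then obtain P where "is_fundamental_solution t M P" "P t = A" by blast
  thus "A = \<Psi> t" using fs_unique[OF _ assms] by blast
qed

lemma avg_in:
  assumes cv: "convex Ms" and cl: "closed Ms" and vals: "\<And>s. s \<in> {0..t} \<Longrightarrow> M s \<in> Ms"
    and ab: "0 \<le> a" "a < b" "b \<le> t"
  shows "(1 / (b - a)) *\<^sub>R G a b \<in> Ms"
proof (rule ccontr)
  assume nz: "(1 / (b - a)) *\<^sub>R G a b \<notin> Ms"
  obtain w c where wc: "inner w ((1 / (b - a)) *\<^sub>R G a b) < c" "\<And>x. x \<in> Ms \<Longrightarrow> c < inner w x"
    using separating_hyperplane_closed_point[OF cv cl nz] by blast
  have i1: "((\<lambda>u. inner w (M u)) has_integral inner w (G a b)) {a..b}"
    using has_integral_linear[OF G_int[of a b] bounded_linear_inner_right[of w]] ab by (simp add: o_def)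
  have i2: "((\<lambda>u. c) has_integral (b - a) * c) {a..b}" using has_integral_const_real[of c a b] ab by simp
  have "(b - a) * c \<le> inner w (G a b)"
    by (rule has_integral_le[OF i2 i1]) (use wc(2) vals ab in \<open>auto intro: less_imp_le\<close>)
  hence "c \<le> inner w (G a b) / (b - a)" using ab by (simp add: le_divide_eq mult.commute)
  moreover have "inner w ((1 / (b - a)) *\<^sub>R G a b) = inner w (G a b) / (b - a)" by simp
  ultimately show False using wc(1) by linarith
qed

end



lemma prodm_add: "prodm f (a + q) = prodm (\<lambda>i. f (a + i)) q ** prodm f a"
  by (induction q) (simp_all add: matrix_mul_assoc)

lemma prodm_blocks: "prodm f (m * q) = prodm (\<lambda>b. prodm (\<lambda>i. f (b*q + i)) q) m"
proof (induction m)
  case 0 thus ?case by simp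
next
  case (Suc m)
  have "prodm f (Suc m * q) = prodm f (m*q + q)" by (simp add: add.commute)
  also have "\<dots> = prodm (\<lambda>i. f (m*q + i)) q ** prodm f (m*q)" by (rule prodm_add)
  finally show ?case using Suc by simp
qed

lemma prodm_cong: "(\<And>i. i < q \<Longrightarrow> f i = g i) \<Longrightarrow> prodm f q = prodm g q"
  by (induction q) auto

lemma blocks_contr:
  fixes BL :: "nat \<Rightarrow> real^'n^'n"
  assumes pos: "\<And>b i k. 0 < BL b $i$k" and rat: "\<And>b i j k. \<theta> * BL b $i$k \<le> BL b $j$k"
    and th: "0 < \<theta>" "\<theta> \<le> 1" and x: "x \<in> pos_orthant" and y: "y \<in> pos_orthant"
  shows "prodm BL m *v x \<in> pos_orthant \<and> prodm BL m *v y \<in> pos_orthant \<and>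
    hilbert_metric (prodm BL m *v x) (prodm BL m *v y) \<le> (1 - min (1/2) ((\<theta>^2)^3))^m * hilbert_metric x y"
proof (induction m)
  case 0 thus ?case using x y by simp
next
  case (Suc m)
  let ?e = "1 - min (1/2) ((\<theta>^2)^3)"
  have e0: "0 \<le> ?e" by simp
  let ?u = "prodm BL m *v x" and ?v = "prodm BL m *v y"
  have eqx: "prodm BL (Suc m) *v x = BL m *v ?u" by (simp add: matrix_vector_mul_assoc)
  have eqy: "prodm BL (Suc m) *v y = BL m *v ?v" by (simp add: matrix_vector_mul_assoc)
  have "hilbert_metric (BL m *v ?u) (BL m *v ?v) \<le> ?e * hilbert_metric ?u ?v"
    using contr[OF pos rat th] Suc by blast
  also have "\<dots> \<le> ?e * (?e^m * hilbert_metric x y)" using Suc e0 by (intro mult_left_mono) auto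
  finally show ?case unfolding eqx eqy using contr_pos[OF pos] Suc by auto
qed

lemma blocks_diag:
  fixes BL :: "nat \<Rightarrow> real^'n^'n"
  assumes pos: "\<And>b i k. 0 < BL b $i$k" and dg: "\<And>b i. \<gamma> \<le> BL b $i$i" and g0: "0 \<le> \<gamma>"
    and x: "x \<in> pos_orthant"
  shows "\<gamma>^m * x$i \<le> (prodm BL m *v x)$i"
proof (induction m)
  case 0 thus ?case by simp
next
  case (Suc m)
  let ?u = "prodm BL m *v x"
  have upos: "?u \<in> pos_orthant"
  proof (induction m)
    case 0 thus ?case using x by simp
  next
    case (Suc m) thus ?case using contr_pos[OF pos] by (simp add: matrix_vector_mul_assoc[symmetric])
  qed
  have "(prodm BL (Suc m) *v x)$i = (BL m *v ?u)$i" by (simp add: matrix_vector_mul_assoc)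
  also have "\<dots> = (\<Sum>l\<in>UNIV. BL m $i$l * ?u$l)" by (rule mv_nth)
  also have "\<dots> \<ge> BL m $i$i * ?u$i"
    by (rule member_le_sum) (use pos upos in \<open>auto simp: pos_orthant_def intro: less_imp_le\<close>)
  finally have A: "BL m $i$i * ?u$i \<le> (prodm BL (Suc m) *v x)$i" .
  have "\<gamma>^Suc m * x$i = \<gamma> * (\<gamma>^m * x$i)" by simp
  also have "\<dots> \<le> BL m $i$i * ?u$i"
  proof (rule mult_mono)
    show "0 \<le> BL m $i$i" using pos[of m i i] by simp
    show "0 \<le> \<gamma>^m * x$i" using g0 x by (simp add: pos_orthant_def less_imp_le)
  qed (use dg Suc in auto)
  finally show ?case using A by linarith
qed

lemma delta_exists:
  fixes Ms :: "(real^'n^'n) set"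
  assumes cpt: "compact Ms" and ne: "Ms \<noteq> {}" and mi: "\<And>A. A \<in> Ms \<Longrightarrow> metzler A \<and> irreducible_mat A"
  shows "\<exists>\<delta>>0. \<forall>S A. S \<noteq> {} \<longrightarrow> S \<noteq> UNIV \<longrightarrow> A \<in> Ms \<longrightarrow> \<delta> \<le> (\<Sum>i\<in>-S. \<Sum>l\<in>S. A$i$l)"
proof -
  define f where "f S A = (\<Sum>i\<in>-S. \<Sum>l\<in>S. A$i$l)" for S :: "'n set" and A :: "real^'n^'n"
  have each: "\<exists>d>0. \<forall>A\<in>Ms. d \<le> f S A" if S: "S \<noteq> {}" "S \<noteq> UNIV" for S
  proof -
    have "continuous_on Ms (f S)" unfolding f_def
      by (intro continuous_on_sum continuous_on_component continuous_on_id)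
    then obtain A0 where A0: "A0 \<in> Ms" "\<And>A. A \<in> Ms \<Longrightarrow> f S A0 \<le> f S A"
      using continuous_attains_inf[OF cpt ne] by blast
    have mA: "metzler A0" and iA: "irreducible_mat A0" using mi[OF A0(1)] by auto
    have nS: "-S \<noteq> {} \<and> -S \<noteq> UNIV" using S by auto
    have "\<forall>I::'n set. I \<noteq> {} \<and> I \<noteq> UNIV \<longrightarrow> (\<exists>i\<in>I. \<exists>j\<in>-I. 0 < A0$i$j)"
      using iA by (simp only: irreducible_mat_def)
    hence "-S \<noteq> {} \<and> -S \<noteq> UNIV \<longrightarrow> (\<exists>i\<in>-S. \<exists>j\<in>-(-S). 0 < A0$i$j)" by (rule spec)
    hence "\<exists>i\<in>-S. \<exists>j\<in>-(-S). 0 < A0$i$j" using nS by (rule mp)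
    then obtain i j where ij: "i \<in> -S" "j \<in> - (-S)" "0 < A0$i$j" by blast
    have nn: "0 \<le> A0$i'$l" if "i' \<in> -S" "l \<in> S" for i' l
    proof -
      have "i' \<noteq> l" using that by auto
      thus ?thesis using mA by (simp add: metzler_def)
    qed
    have "0 < A0$i$j" by (rule ij(3))
    also have "\<dots> \<le> (\<Sum>l\<in>S. A0$i$l)" using ij nn by (intro member_le_sum) auto
    also have "\<dots> \<le> f S A0" unfolding f_def
    proof (rule member_le_sum[of i "-S" "\<lambda>i. \<Sum>l\<in>S. A0$i$l"])
      show "i \<in> -S" by (rule ij(1))
      show "finite (-S)" by simp
      fix x assume "x \<in> -S - {i}"
      thus "0 \<le> (\<Sum>l\<in>S. A0$x$l)" using nn by (intro sum_nonneg) auto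
    qed
    finally show ?thesis using A0 by (intro exI[of _ "f S A0"]) auto
  qed
  define SS where "SS = {S :: 'n set. S \<noteq> {} \<and> S \<noteq> UNIV}"
  have gen: "finite X \<Longrightarrow> X \<subseteq> SS \<Longrightarrow> \<exists>d>0. \<forall>S\<in>X. \<forall>A\<in>Ms. d \<le> f S A" for X
  proof (induction X rule: finite_induct)
    case empty thus ?case by (intro exI[of _ 1]) auto
  next
    case (insert S X)
    then obtain d where d: "d > 0" "\<forall>S\<in>X. \<forall>A\<in>Ms. d \<le> f S A" by blast
    have "S \<noteq> {}" "S \<noteq> UNIV" using insert.prems by (auto simp: SS_def)
    then obtain d' where d': "d' > 0" "\<forall>A\<in>Ms. d' \<le> f S A" using each by blast
    have "\<forall>S'\<in>insert S X. \<forall>A\<in>Ms. min d d' \<le> f S' A"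
    proof (intro ballI)
      fix S' A assume "S' \<in> insert S X" "A \<in> Ms"
      thus "min d d' \<le> f S' A" using d(2) d'(2) by (metis insertE min.coboundedI1 min.coboundedI2)
    qed
    thus ?case using d d' by (intro exI[of _ "min d d'"]) auto
  qed
  obtain d where "d > 0" "\<forall>S\<in>SS. \<forall>A\<in>Ms. d \<le> f S A" using gen[of SS] by auto
  thus ?thesis by (auto simp: SS_def f_def)
qed

lemma entry_lim:
  fixes P :: "nat \<Rightarrow> real^'n^'n"
  assumes "P \<longlonglongrightarrow> R"
  shows "(\<lambda>p. (P p *v x)$i) \<longlonglongrightarrow> (R *v x)$i"
  unfolding mv_nth by (intro tendsto_intros assms)

lemma main_fixed:
  fixes Ms :: "(real^'n^'n) set"
  assumes cv: "convex Ms" and cpt: "compact Ms" and ne: "Ms \<noteq> {}"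
    and mi: "\<And>A. A \<in> Ms \<Longrightarrow> metzler A \<and> irreducible_mat A"
    and B0: "0 < B" and Bb: "\<And>A. A \<in> Ms \<Longrightarrow> norm A \<le> B"
    and d0: "0 < \<delta>" and dS: "\<And>S A. S \<noteq> {} \<Longrightarrow> S \<noteq> UNIV \<Longrightarrow> A \<in> Ms \<Longrightarrow> \<delta> \<le> (\<Sum>i\<in>-S. \<Sum>l\<in>S. A$i$l)"
    and K0: "0 < K" and Kb: "\<And>(A::real^'n^'n) (X::real^'n^'n). norm (A ** X) \<le> K * norm A * norm X"
    and t1: "1 \<le> t" and adm: "admissible_control t Ms M"
    and x: "x \<in> pos_orthant" and y: "y \<in> pos_orthant"
  defines "\<gamma> \<equiv> exp (-4*B) * (min 1 (\<delta> / real CARD('n)^2))^(CARD('n) - 1)"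
    and "\<Gamma> \<equiv> exp (2 * real CARD('n) * B)"
  shows "hilbert_metric (resolvent t M *v x) (resolvent t M *v y)
           \<le> (1 - min (1/2) (((\<gamma>/\<Gamma>)^2)^3))^(nat \<lfloor>t\<rfloor>) * hilbert_metric x y"
proof -
  define n where "n = CARD('n)"
  define m where "m = nat \<lfloor>t\<rfloor>"
  define \<theta> where "\<theta> = \<gamma> / \<Gamma>"
  define \<epsilon> where "\<epsilon> = min (1/2) ((\<theta>^2)^3)"
  define D where "D = (1 - \<epsilon>)^m * hilbert_metric x y"
  have n1: "1 \<le> n" by (simp add: n_def Suc_leI)
  have f1: "(1::int) \<le> \<lfloor>t\<rfloor>" using floor_mono[OF t1] by simp
  hence m1: "1 \<le> m" unfolding m_def by (subst le_nat_iff) auto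
  have mt: "real m \<le> t" using t1 by (simp add: m_def)
  have tm: "t < real m + 1" using t1 by (simp add: m_def)
  define Lb where "Lb = t / real m"
  have Lb1: "1 \<le> Lb" using mt m1 by (simp add: Lb_def)
  have Lb2: "Lb < 2"
  proof -
    have "t < 2 * real m" using tm m1 by linarith
    thus ?thesis using m1 by (simp add: Lb_def divide_less_eq)
  qed
  have Ms_vals: "\<And>s. s \<in> {0..t} \<Longrightarrow> M s \<in> Ms" using adm by (simp add: admissible_control_def)
  have meas: "M \<in> borel_measurable (lebesgue_on {0..t})" using adm by (simp add: admissible_control_def)
  interpret c: ctrl t M B K
    by unfold_locales (use t1 meas Ms_vals Bb K0 Kb in auto)
  have R: "resolvent t M = c.Phi t" by (rule c.resolvent_eq[OF c.Phi_fs])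
  have cl: "closed Ms" using cpt by (rule compact_imp_closed)
  have entry: "\<bar>A$i$l\<bar> \<le> B" if "A \<in> Ms" for A i l
  proof -
    have "\<bar>A$i$l\<bar> \<le> norm (A$i)" by (rule component_le_norm_cart)
    also have "norm (A$i) \<le> norm A" by (rule Finite_Cartesian_Product.norm_nth_le)
    also have "\<dots> \<le> B" by (rule Bb[OF that])
    finally show ?thesis .
  qed
  have g0: "0 < \<gamma>" using d0 by (simp add: \<gamma>_def)
  have G0: "0 < \<Gamma>" by (simp add: \<Gamma>_def)
  obtain Astar where Astar: "Astar \<in> Ms" using ne by blast
  define p0 where "p0 = nat \<lceil>4*B\<rceil> + 1"
  have perp: "(\<forall>i. \<gamma>^m * x$i \<le> (prodm (c.Ek (m*(n*p))) (m*(n*p)) *v x)$i) \<and>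
              (\<forall>i. \<gamma>^m * y$i \<le> (prodm (c.Ek (m*(n*p))) (m*(n*p)) *v y)$i) \<and>
              (\<forall>i j. (prodm (c.Ek (m*(n*p))) (m*(n*p)) *v x)$i * (prodm (c.Ek (m*(n*p))) (m*(n*p)) *v y)$j
                 \<le> exp D * ((prodm (c.Ek (m*(n*p))) (m*(n*p)) *v x)$j * (prodm (c.Ek (m*(n*p))) (m*(n*p)) *v y)$i))"
    if p: "p0 \<le> p" for p
  proof -
    define k where "k = m*(n*p)"
    define q where "q = n*p"
    define hh where "hh = c.hk k"
    have p1: "1 \<le> p" using p by (simp add: p0_def)
    have k0: "0 < k" using m1 n1 p1 by (simp add: k_def)
    have hh_eq: "hh = Lb / (real n * real p)" by (simp add: hh_def c.hk_def k_def Lb_def)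
    have hh0: "0 < hh" using Lb1 n1 p1 by (simp add: hh_eq)
    have qh: "real q * hh = Lb" using n1 p1 by (simp add: q_def hh_eq)
    have ph: "real p * hh = Lb / real n" using n1 p1 by (simp add: hh_eq)
    have hB: "hh * B \<le> 1/2"
    proof -
      have "4*B \<le> real p" using p by (simp add: p0_def) linarith
      have "hh \<le> 2 / real p"
      proof -
        have "hh = Lb / (real n * real p)" by (rule hh_eq)
        also have "\<dots> \<le> 2 / (real n * real p)" using Lb2 n1 p1 by (intro divide_right_mono) auto
        also have "\<dots> \<le> 2 / real p" using n1 p1 by (intro divide_left_mono) auto
        finally show ?thesis .
      qed
      hence "hh * B \<le> 2 / real p * B" using B0 by (intro mult_right_mono) auto
      also have "\<dots> \<le> 1/2" using \<open>4*B \<le> real p\<close> p1 by (simp add: field_simps)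
      finally show ?thesis .
    qed
    define AA where "AA j = (if j < k then (1/hh) *\<^sub>R c.G (real j * hh) (real (Suc j) * hh) else Astar)" for j
    have AA_in: "AA j \<in> Ms" for j
    proof (cases "j < k")
      case True
      have b: "real (Suc j) * hh \<le> t"
      proof -
        have "real (Suc j) * hh \<le> real k * hh" using True hh0 by (intro mult_right_mono) auto
        also have "real k * hh = t" using k0 by (simp add: hh_def c.hk_def)
        finally show ?thesis .
      qed
      have "(1 / (real (Suc j) * hh - real j * hh)) *\<^sub>R c.G (real j * hh) (real (Suc j) * hh) \<in> Ms"
        by (rule c.avg_in[OF cv cl Ms_vals]) (use hh0 b in \<open>auto simp: algebra_simps\<close>)
      moreover have "real (Suc j) * hh - real j * hh = hh" by (simp add: algebra_simps)
      ultimately show ?thesis using True by (simp add: AA_def)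
    next
      case False thus ?thesis using Astar by (simp add: AA_def)
    qed
    have Ek_eq: "c.Ek k j = mat 1 + hh *\<^sub>R AA j" if "j < k" for j
      using that hh0 by (simp add: AA_def c.Ek_def hh_def)
    define BL where "BL b = prodm (\<lambda>i. mat 1 + hh *\<^sub>R AA (b*q + i)) q" for b
    have Pdec: "prodm (c.Ek k) k = prodm BL m"
    proof -
      have "prodm (c.Ek k) k = prodm (\<lambda>b. prodm (\<lambda>i. c.Ek k (b*q + i)) q) m"
        unfolding k_def q_def by (rule prodm_blocks)
      also have "\<dots> = prodm BL m"
      proof (rule prodm_cong)
        fix b assume b: "b < m"
        show "prodm (\<lambda>i. c.Ek k (b*q + i)) q = BL b" unfolding BL_def
        proof (rule prodm_cong)
          fix i assume i: "i < q"
          have "b*q + i < (b+1)*q" using i by simp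
          also have "(b+1)*q \<le> m*q" using b by (intro mult_right_mono) auto
          finally have "b*q + i < k" by (simp add: k_def q_def)
          thus "c.Ek k (b*q + i) = mat 1 + hh *\<^sub>R AA (b*q + i)" by (rule Ek_eq)
        qed
      qed
      finally show ?thesis .
    qed
    have blk_bounds: "\<gamma> \<le> BL b $i$l \<and> BL b $i$l \<le> \<Gamma>" for b i l
    proof -
      interpret bb: blk "\<lambda>j. AA (b*q + j)" B hh \<delta>
      proof
        fix j :: nat and i l :: 'n assume "i \<noteq> l"
        thus "0 \<le> AA (b*q + j) $i$l" using mi[OF AA_in] by (simp add: metzler_def)
      next
        fix j i l show "\<bar>AA (b*q + j) $i$l\<bar> \<le> B" by (rule entry[OF AA_in])
      next
        fix j and S :: "'n set" assume "S \<noteq> {}" "S \<noteq> UNIV"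
        thus "\<delta> \<le> (\<Sum>i\<in>-S. \<Sum>l\<in>S. AA (b*q + j) $i$l)" using dS AA_in by blast
      qed (use hh0 hB in auto)
      have "bb.N = (\<lambda>i. mat 1 + hh *\<^sub>R AA (b*q + i))" by (rule ext) (simp add: bb.N_def)
      hence BLQ: "BL b = bb.Q q" by (simp add: BL_def bb.Q_def)
      have lo: "exp (-2 * B * (real (n * p) * hh)) * (min 1 (real p * hh * \<delta> / real n))^(n - 1) \<le> BL b $i$l"
        using bb.Q_lower[OF d0, of p i l] p1 by (simp add: BLQ q_def n_def)
      have "\<gamma> \<le> exp (-2 * B * (real (n * p) * hh)) * (min 1 (real p * hh * \<delta> / real n))^(n - 1)"
      proof -
        have e1: "exp (-4*B) \<le> exp (-2 * B * (real (n * p) * hh))"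
          using qh Lb2 B0 by (simp add: q_def)
        have "\<delta> / real n^2 \<le> real p * hh * \<delta> / real n"
        proof -
          have "\<delta> / real n^2 = (1 / real n) * \<delta> / real n" by (simp add: power2_eq_square)
          also have "\<dots> \<le> (Lb / real n) * \<delta> / real n" using Lb1 n1 d0
            by (intro divide_right_mono mult_right_mono) (auto simp: divide_right_mono)
          finally show ?thesis using ph by simp
        qed
        hence "min 1 (\<delta> / real n^2) \<le> min 1 (real p * hh * \<delta> / real n)" by simp
        hence e2: "(min 1 (\<delta> / real n^2))^(n-1) \<le> (min 1 (real p * hh * \<delta> / real n))^(n-1)"
          using d0 by (intro power_mono) auto
        show ?thesis unfolding \<gamma>_def n_def[symmetric]
          using e1 e2 d0 by (intro mult_mono) auto
      qed
      moreover have "BL b $i$l \<le> \<Gamma>"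
      proof -
        have "BL b $i$l \<le> exp (real CARD('n) * B * (real q * hh))"
          unfolding BLQ by (rule bb.Q_upper_exp)
        also have "\<dots> \<le> \<Gamma>" unfolding \<Gamma>_def using qh Lb2 B0 by simp
        finally show ?thesis .
      qed
      ultimately show ?thesis using lo by linarith
    qed
    have posBL: "\<And>b i l. 0 < BL b $i$l" using blk_bounds g0 by (meson less_le_trans)
    have th0: "0 < \<theta>" using g0 G0 by (simp add: \<theta>_def)
    have th1: "\<theta> \<le> 1" using blk_bounds[of 0 undefined undefined] g0 G0 by (simp add: \<theta>_def)
    have ratBL: "\<theta> * BL b $i$l \<le> BL b $j$l" for b i j l
    proof -
      have "\<theta> * BL b $i$l \<le> \<theta> * \<Gamma>" using blk_bounds th0 by (intro mult_left_mono) auto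
      also have "\<dots> = \<gamma>" using G0 by (simp add: \<theta>_def)
      also have "\<dots> \<le> BL b $j$l" using blk_bounds by blast
      finally show ?thesis .
    qed
    have bc: "hilbert_metric (prodm BL m *v x) (prodm BL m *v y) \<le> D"
      and pxy: "prodm BL m *v x \<in> pos_orthant" "prodm BL m *v y \<in> pos_orthant"
      using blocks_contr[OF posBL ratBL th0 th1 x y, where m=m] by (auto simp: D_def \<epsilon>_def)
    have dx: "\<gamma>^m * x$i \<le> (prodm BL m *v x)$i" for i
      by (rule blocks_diag[OF posBL _ _ x]) (use blk_bounds g0 in auto)
    have dy: "\<gamma>^m * y$i \<le> (prodm BL m *v y)$i" for i
      by (rule blocks_diag[OF posBL _ _ y]) (use blk_bounds g0 in auto)
    have rat: "(prodm BL m *v x)$i * (prodm BL m *v y)$j \<le> exp D * ((prodm BL m *v x)$j * (prodm BL m *v y)$i)" for i j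
    proof -
      have "hr (prodm BL m *v x) (prodm BL m *v y) i j \<le> exp D"
        using hilbert_ratio_le[OF pxy, of i j] bc by (meson exp_le_cancel_iff order_trans)
      moreover have "0 < (prodm BL m *v x)$j * (prodm BL m *v y)$i" using pxy by (simp add: pos_orthant_def)
      ultimately show ?thesis by (simp add: hr_def divide_le_eq mult.commute)
    qed
    show ?thesis using dx dy rat unfolding Pdec[unfolded k_def] by blast
  qed
  define P where "P p = prodm (c.Ek (m*(n*p))) (m*(n*p))" for p
  define C where "C = c.L*c.L*c.C0 c.Phi*t^2 * exp(K*B*t)"
  have C0: "0 \<le> C" using c.C0(1)[OF c.Phi_fs] by (simp add: C_def)
  have bnd: "norm (P p - c.Phi t) \<le> C / real p" if p1: "1 \<le> p" for p
  proof -
    have k0: "0 < m*(n*p)" using m1 n1 p1 by simp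
    have "norm (P p - c.Phi t) = norm (c.Phi t - prodm (c.Ek (m*(n*p))) (m*(n*p)))"
      by (simp add: P_def norm_minus_commute)
    also have "\<dots> \<le> (c.L*c.L*c.C0 c.Phi*t^2 / real (m*(n*p))) * exp(K*B*t)"
      by (rule c.euler_final[OF c.Phi_fs k0])
    also have "\<dots> = C / real (m*(n*p))" by (simp add: C_def)
    also have "\<dots> \<le> C / real p"
    proof (rule divide_left_mono[OF _ C0])
      have "p \<le> m*(n*p)" using m1 n1 by simp
      thus "real p \<le> real (m*(n*p))" by linarith
      show "0 < real (m*(n*p)) * real p" using k0 p1 by simp
    qed
    finally show ?thesis .
  qed
  have "(\<lambda>p. P p - c.Phi t) \<longlonglongrightarrow> 0"
  proof (rule Lim_null_comparison)
    show "\<forall>\<^sub>F p in sequentially. norm (P p - c.Phi t) \<le> C / real p"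
      using bnd by (auto simp: eventually_sequentially intro!: exI[of _ 1])
    show "(\<lambda>p. C / real p) \<longlonglongrightarrow> 0" by (rule lim_const_over_n)
  qed
  hence "(\<lambda>p. (P p - c.Phi t) + c.Phi t) \<longlonglongrightarrow> 0 + c.Phi t" by (intro tendsto_add tendsto_const)
  hence lim: "P \<longlonglongrightarrow> c.Phi t" by simp
  have ev: "\<forall>\<^sub>F p in sequentially. p0 \<le> p" by (simp add: eventually_ge_at_top)
  define Rm where "Rm = c.Phi t"
  have Lx: "(\<lambda>p. (P p *v x)$i) \<longlonglongrightarrow> (Rm *v x)$i" for i using entry_lim[OF lim] by (simp add: Rm_def)
  have Ly: "(\<lambda>p. (P p *v y)$i) \<longlonglongrightarrow> (Rm *v y)$i" for i using entry_lim[OF lim] by (simp add: Rm_def)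
  have gm: "0 < \<gamma>^m" using g0 by simp
  have Rx: "\<gamma>^m * x$i \<le> (Rm *v x)$i" for i
    by (rule tendsto_le[OF trivial_limit_sequentially Lx tendsto_const])
       (rule eventually_mono[OF ev], use perp in \<open>auto simp: P_def\<close>)
  have Ry: "\<gamma>^m * y$i \<le> (Rm *v y)$i" for i
    by (rule tendsto_le[OF trivial_limit_sequentially Ly tendsto_const])
       (rule eventually_mono[OF ev], use perp in \<open>auto simp: P_def\<close>)
  have Rxp: "Rm *v x \<in> pos_orthant"
  proof -
    have "0 < (Rm *v x)$i" for i
    proof -
      have "0 < \<gamma>^m * x$i" using gm x by (simp add: pos_orthant_def)
      thus ?thesis using Rx[of i] by linarith
    qed
    thus ?thesis by (simp add: pos_orthant_def)
  qed
  have Ryp: "Rm *v y \<in> pos_orthant"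
  proof -
    have "0 < (Rm *v y)$i" for i
    proof -
      have "0 < \<gamma>^m * y$i" using gm y by (simp add: pos_orthant_def)
      thus ?thesis using Ry[of i] by linarith
    qed
    thus ?thesis by (simp add: pos_orthant_def)
  qed
  have Rrat: "(Rm *v x)$i * (Rm *v y)$j \<le> exp D * ((Rm *v x)$j * (Rm *v y)$i)" for i j
  proof (rule tendsto_le[OF trivial_limit_sequentially])
    show "(\<lambda>p. exp D * ((P p *v x)$j * (P p *v y)$i)) \<longlonglongrightarrow> exp D * ((Rm *v x)$j * (Rm *v y)$i)"
      by (intro tendsto_intros Lx Ly)
    show "(\<lambda>p. (P p *v x)$i * (P p *v y)$j) \<longlonglongrightarrow> (Rm *v x)$i * (Rm *v y)$j"
      by (intro tendsto_intros Lx Ly)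
    show "\<forall>\<^sub>F p in sequentially. (P p *v x)$i * (P p *v y)$j \<le> exp D * ((P p *v x)$j * (P p *v y)$i)"
      by (rule eventually_mono[OF ev]) (use perp in \<open>auto simp: P_def\<close>)
  qed
  have "hilbert_metric (Rm *v x) (Rm *v y) \<le> D"
  proof (rule hilbert_le[OF _ Rxp Ryp])
    fix i j
    have "0 < (Rm *v x)$j * (Rm *v y)$i" using Rxp Ryp by (simp add: pos_orthant_def)
    thus "hr (Rm *v x) (Rm *v y) i j \<le> exp D" using Rrat[of i j] by (simp add: hr_def divide_le_eq mult.commute)
  qed
  thus ?thesis using R by (simp add: Rm_def D_def \<epsilon>_def \<theta>_def m_def)
qed

theorem lemma3:
  fixes Ms :: "(real^'n^'n) set"
  assumes "compact Ms" and "convex Ms"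
    and "\<And>A. A \<in> Ms \<Longrightarrow> metzler A \<and> irreducible_mat A"
  shows "\<exists>T>0. \<exists>\<mu>>0. \<forall>t\<ge>T. \<forall>M. admissible_control t Ms M \<longrightarrow>
           (\<forall>x\<in>pos_orthant. \<forall>y\<in>pos_orthant.
              hilbert_metric (resolvent t M *v x) (resolvent t M *v y)
                \<le> exp (- \<mu> * t) * hilbert_metric x y)"
proof (cases "Ms = {}")
  case True
  have "\<not> admissible_control t Ms M" if "1 \<le> t" for t M
  proof
    assume "admissible_control t Ms M"
    hence "M 0 \<in> Ms" using that by (simp add: admissible_control_def)
    thus False using True by simp
  qed
  thus ?thesis by (intro exI[of _ 1]) (auto intro!: exI[of _ "1::real"])
next
  case False
  note cpt = assms(1) and cv = assms(2) and mi = assms(3)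
  obtain B where B0: "0 < B" and Bb: "\<And>A. A \<in> Ms \<Longrightarrow> norm A \<le> B"
    using compact_imp_bounded[OF cpt] by (auto simp: bounded_pos)
  obtain \<delta> where d0: "0 < \<delta>"
    and dS: "\<And>S A. S \<noteq> {} \<Longrightarrow> S \<noteq> UNIV \<Longrightarrow> A \<in> Ms \<Longrightarrow> \<delta> \<le> (\<Sum>i\<in>-S. \<Sum>l\<in>S. A$i$l)"
    using delta_exists[OF cpt False mi] by blast
  obtain K where K0: "0 < K" and Kb: "\<And>(A::real^'n^'n) (X::real^'n^'n). norm (A ** X) \<le> K * norm A * norm X"
    using bilinear_bounded_pos[OF bilinear_mm[where 'n='n and 'm='n and 'k='n]] by blast
  define \<gamma> where "\<gamma> = exp (-4*B) * (min 1 (\<delta> / real CARD('n)^2))^(CARD('n) - 1)"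
  define \<Gamma> where "\<Gamma> = exp (2 * real CARD('n) * B)"
  define \<epsilon> where "\<epsilon> = min (1/2) (((\<gamma>/\<Gamma>)^2)^3)"
  have g0: "0 < \<gamma>" using d0 by (simp add: \<gamma>_def)
  have G0: "0 < \<Gamma>" by (simp add: \<Gamma>_def)
  have e0: "0 < \<epsilon>" "\<epsilon> \<le> 1/2" using g0 G0 by (auto simp: \<epsilon>_def)
  define \<mu> where "\<mu> = \<epsilon> / 2"
  have mu0: "0 < \<mu>" using e0 by (simp add: \<mu>_def)
  have main: "hilbert_metric (resolvent t M *v x) (resolvent t M *v y) \<le> exp (- \<mu> * t) * hilbert_metric x y"
    if t1: "1 \<le> t" and adm: "admissible_control t Ms M" and x: "x \<in> pos_orthant" and y: "y \<in> pos_orthant"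
    for t M x y
  proof -
    define m where "m = nat \<lfloor>t\<rfloor>"
    have f1: "(1::int) \<le> \<lfloor>t\<rfloor>" using floor_mono[OF t1] by simp
    hence m1: "1 \<le> m" unfolding m_def by (subst le_nat_iff) auto
    have tm: "t < real m + 1" using t1 by (simp add: m_def)
    have t2m: "t \<le> 2 * real m" using tm m1 by linarith
    have mf: "hilbert_metric (resolvent t M *v x) (resolvent t M *v y) \<le> (1 - \<epsilon>)^m * hilbert_metric x y"
      using main_fixed[OF cv cpt False mi B0 Bb d0 dS K0 Kb t1 adm x y]
      by (simp add: \<epsilon>_def \<gamma>_def \<Gamma>_def m_def)
    have "(1 - \<epsilon>)^m \<le> exp (-\<epsilon>)^m"
      using e0 exp_ge_add_one_self[of "-\<epsilon>"] by (intro power_mono) auto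
    also have "\<dots> = exp (- (\<epsilon> * real m))" by (simp add: exp_of_nat_mult[symmetric] mult.commute)
    also have "\<dots> \<le> exp (- \<mu> * t)"
    proof -
      have "\<epsilon> * t \<le> \<epsilon> * (2 * real m)" using e0 t2m by (intro mult_left_mono) auto
      thus ?thesis by (simp add: \<mu>_def)
    qed
    finally have "(1 - \<epsilon>)^m \<le> exp (- \<mu> * t)" .
    moreover have "0 \<le> hilbert_metric x y" using x y by (rule hilbert_nonneg)
    ultimately have "(1 - \<epsilon>)^m * hilbert_metric x y \<le> exp (- \<mu> * t) * hilbert_metric x y"
      by (rule mult_right_mono)
    thus ?thesis using mf by linarith
  qed
  show ?thesis
    by (rule exI[of _ 1], simp, rule exI[of _ \<mu>], use mu0 main in auto)
qed


end
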